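(* Let $n,m,p,T\in\mathbb{N}$ and $L\in[1,T]$. An input sequence $u_{[0,T-1]}\in\mathbb{R}^{mT}$ is universal for determining the $L$-restricted behavior (for systems with state dimension $n$, input dimension $m$, output dimension $p$) if and only if it is persistently exciting of order $n+L$.
   Context: For integers $a\le b$, $[a,b]=\{c\in\mathbb{Z}: a\le c\le b\}$. For $v:\mathbb{Z}_+\to\mathbb{R}^q$, $v_{[0,T-1]}=\begin{bmatrix}v(0)^\top & \cdots & v(T-1)^\top\end{bmatrix}^\top$. For $k\in[1,T]$ the Hankel matrix of depth $k$ is the $qk\times(T-k+1)$ block matrix $\mathcal{H}_k(v_{[0,T-1]})$ whose $(i,j)$ block ($i\in[0,k-1]$, $j\in[0,T-k]$) is $v(i+j)$. The sequence $v_{[0,T-1]}$ is persistently exciting of order $k$ if $k\le T$ and $\mathcal{H}_k(v_{[0,T-1]})$ has full row rank (if $k>T$ it is not persistently exciting of order $k$). Systems: $x(t+1)=Ax(t)+Bu(t)$, $y(t)=Cx(t)+Du(t)$ with $(A,B,C,D)\in\mathbb{R}^{n\times n}\times\mathbb{R}^{n\times m}\times\mathbb{R}^{p\times n}\times\mathbb{R}^{p\times m}$; $\mathcal{M}_{\rm cont}$ is the set of such quadruples with $(A,B)$ controllable. The input-output behavior $\mathfrak{B}(A,B,C,D)$ is the set of $(u,y):\mathbb{Z}_+\to\mathbb{R}^m\times\mathbb{R}^p$ for which some $x:\mathbb{Z}_+\to\mathbb{R}^n$ satisfies both equations; the $k$-restricted behavior is $\mathfrak{B}_k(A,B,C,D)=\{\begin{bmatrix}u_{[0,k-1]}\\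 y_{[0,k-1]}\end{bmatrix} : (u,y)\in\mathfrak{B}(A,B,C,D)\}$. An input $u_{[0,T-1]}$ is universal for determining the $L$-restricted behavior if for every $(A,B,C,D)\in\mathcal{M}_{\rm cont}$ and every $y_{[0,T-1]}$ with $\begin{bmatrix}u_{[0,T-1]}\\ y_{[0,T-1]}\end{bmatrix}\in\mathfrak{B}_T(A,B,C,D)$ one has $\mathfrak{B}_L(A,B,C,D)=\operatorname{im}\begin{bmatrix}\mathcal{H}_L(u_{[0,T-1]})\\ \mathcal{H}_L(y_{[0,T-1]})\end{bmatrix}$. *)

theory Defs
  imports "Jordan_Normal_Form.DL_Rank"
begin

definition stack :: "nat \<Rightarrow> nat \<Rightarrow> (nat \<Rightarrow> real vec) \<Rightarrow> real vec" where
  "stack q k v = vec (q * k) (\<lambda>i. v (i div q) $ (i mod q))"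

definition hankel :: "nat \<Rightarrow> nat \<Rightarrow> nat \<Rightarrow> (nat \<Rightarrow> real vec) \<Rightarrow> real mat" where
  "hankel q k T v = mat (q * k) (T - k + 1) (\<lambda>(r, c). v (r div q + c) $ (r mod q))"

definition full_row_rank :: "real mat \<Rightarrow> bool" where
  "full_row_rank M \<longleftrightarrow> vec_space.rank (dim_row M) M = dim_row M"

definition persistently_exciting :: "nat \<Rightarrow> nat \<Rightarrow> nat \<Rightarrow> (nat \<Rightarrow> real vec) \<Rightarrow> bool" where
  "persistently_exciting q T k v \<longleftrightarrow> k \<le> T \<and> full_row_rank (hankel q k T v)"

definition mat_image :: "real mat \<Rightarrow> real vec set" where
  "mat_image M = {M *\<^sub>v x | x. x \<in> carrier_vec (dim_col M)}"

definition ctrb_mat :: "nat \<Rightarrow> nat \<Rightarrow> real mat \<Rightarrow> real mat \<Rightarrow> real mat" where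
  "ctrb_mat n m A B = mat n (n * m) (\<lambda>(i, j). ((A ^\<^sub>m (j div m)) * B) $$ (i, j mod m))"

definition controllable :: "nat \<Rightarrow> nat \<Rightarrow> real mat \<Rightarrow> real mat \<Rightarrow> bool" where
  "controllable n m A B \<longleftrightarrow> vec_space.rank n (ctrb_mat n m A B) = n"

definition M_cont :: "nat \<Rightarrow> nat \<Rightarrow> nat \<Rightarrow> (real mat \<times> real mat \<times> real mat \<times> real mat) set" where
  "M_cont n m p = {(A, B, C, D). A \<in> carrier_mat n n \<and> B \<in> carrier_mat n m \<and>
      C \<in> carrier_mat p n \<and> D \<in> carrier_mat p m \<and> controllable n m A B}"

definition behavior :: "nat \<Rightarrow> nat \<Rightarrow> nat \<Rightarrow> real mat \<Rightarrow> real mat \<Rightarrow> real mat \<Rightarrow> real mat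
    \<Rightarrow> ((nat \<Rightarrow> real vec) \<times> (nat \<Rightarrow> real vec)) set" where
  "behavior n m p A B C D = {(u, y). (\<forall>t. u t \<in> carrier_vec m \<and> y t \<in> carrier_vec p) \<and>
      (\<exists>x. \<forall>t. x t \<in> carrier_vec n \<and> x (Suc t) = A *\<^sub>v x t + B *\<^sub>v u t \<and>
                y t = C *\<^sub>v x t + D *\<^sub>v u t)}"

definition restricted_behavior :: "nat \<Rightarrow> nat \<Rightarrow> nat \<Rightarrow> nat \<Rightarrow> real mat \<Rightarrow> real mat \<Rightarrow> real mat
    \<Rightarrow> real mat \<Rightarrow> real vec set" where
  "restricted_behavior n m p k A B C D =
     {stack m k u @\<^sub>v stack p k y | u y. (u, y) \<in> behavior n m p A B C D}"

definition universal :: "nat \<Rightarrow> nat \<Rightarrow> nat \<Rightarrow> nat \<Rightarrow> nat \<Rightarrow> (nat \<Rightarrow> real vec) \<Rightarrow> bool" where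
  "universal n m p T L u \<longleftrightarrow>
     (\<forall>A B C D y. (A, B, C, D) \<in> M_cont n m p \<longrightarrow>
        (\<forall>t<T. y t \<in> carrier_vec p) \<longrightarrow>
        stack m T u @\<^sub>v stack p T y \<in> restricted_behavior n m p T A B C D \<longrightarrow>
        restricted_behavior n m p L A B C D =
          mat_image (hankel m L T u @\<^sub>r hankel p L T y))"

end

theory Submission
  imports Defs
begin

context vec_space
begin

lemma span_cols_eq:
  assumes M: "M \<in> carrier_mat n c"
  shows "span (set (cols M)) = {M *\<^sub>v v | v. v \<in> carrier_vec c}"
proof -
  have sub: "set (cols M) \<subseteq> carrier_vec n" using M cols_dim by blast
  have "span (set (cols M)) = span_list (cols M)" using span_list_as_span[OF sub] by simp
  also have "\<dots> = {lincomb_list f (cols M) | f. f \<in> {0..<length (cols M)} \<rightarrow> carrier class_ring}"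
    unfolding span_list_def by simp
  also have "\<dots> = {M *\<^sub>v v | v. v \<in> carrier_vec c}"
  proof -
    have eq: "lincomb_list f (cols M) = M *\<^sub>v vec c f" for f
    proof -
      have "lincomb_list f (cols M) = mat_of_cols n (cols M) *\<^sub>v vec (length (cols M)) f"
        by (rule lincomb_list_as_mat_mult) (use sub in auto)
      also have "mat_of_cols n (cols M) = M" using mat_of_cols_cols[of M] M by simp
      finally show ?thesis using M by simp
    qed
    show ?thesis
    proof (safe)
      fix f show "\<exists>v. lincomb_list f (cols M) = M *\<^sub>v v \<and> v \<in> carrier_vec c"
        using eq by auto
    next
      fix v :: "'a vec" assume v: "v \<in> carrier_vec c"
      have "v = vec c (\<lambda>i. v $ i)" using v by auto
      then have "M *\<^sub>v v = lincomb_list (\<lambda>i. v $ i) (cols M)" using eq by metis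
      then show "\<exists>f. M *\<^sub>v v = lincomb_list f (cols M) \<and> f \<in> {0..<length (cols M)} \<rightarrow> carrier class_ring"
        by auto
    qed
  qed
  finally show ?thesis .
qed

lemma rank_full_if_surj:
  assumes M: "M \<in> carrier_mat n c"
    and S: "\<And>b. b \<in> carrier_vec n \<Longrightarrow> \<exists>v\<in>carrier_vec c. M *\<^sub>v v = b"
  shows "rank M = n"
proof -
  have "span (set (cols M)) = carrier_vec n"
    using span_cols_eq[OF M] S M by (auto)
  then have "span_vs (set (cols M)) = V" by simp
  then show ?thesis unfolding rank_def using dim_is_n by simp
qed

lemma surj_if_rank_full:
  assumes M: "M \<in> carrier_mat n c"
    and R: "rank M = n"
    and b: "b \<in> carrier_vec n"
  shows "\<exists>v\<in>carrier_vec c. M *\<^sub>v v = b"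
proof -
  let ?W = "span (set (cols M))"
  have sub: "set (cols M) \<subseteq> carrier_vec n" using M cols_dim by blast
  have subm: "submodule class_ring ?W V" using span_is_submodule sub by simp
  have vsW: "vectorspace class_ring (vs ?W)"
    using span_is_subspace sub subspace_is_vs by simp
  have fdW: "vectorspace.fin_dim class_ring (vs ?W)" using fin_dim_span_cols[OF M] .
  obtain \<beta> where fb: "finite \<beta>" and bas: "vectorspace.basis class_ring (vs ?W) \<beta>"
    using vectorspace.finite_basis_exists[OF vsW fdW] by blast
  have dimW: "vectorspace.dim class_ring (vs ?W) = card \<beta>"
    using vectorspace.dim_basis[OF vsW fb bas] .
  have card: "card \<beta> = n" using R dimW unfolding rank_def by simp
  have bW: "\<beta> \<subseteq> ?W" using bas vectorspace.basis_def[OF vsW] by auto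
  have bC: "\<beta> \<subseteq> carrier_vec n" using bW span_is_subset2[OF sub] by auto
  have li: "lin_indpt \<beta>"
    using bas vectorspace.basis_def[OF vsW] span_li_not_depend(2)[OF bW subm] by auto
  have "basis \<beta>" by (rule dim_li_is_basis[OF fin_dim fb bC li]) (use card dim_is_n in simp)
  then have "span \<beta> = carrier V" unfolding basis_def by simp
  moreover have "span \<beta> \<subseteq> ?W" using span_subsetI[OF sub bW] .
  ultimately have "b \<in> ?W" using b by auto
  then show ?thesis using span_cols_eq[OF M] by auto
qed
end

lemma sumsq_zero_vec:
  fixes z :: "real vec"
  assumes z: "z \<in> carrier_vec r" and s: "(\<Sum>i<r. z $ i * z $ i) = 0"
  shows "z = 0\<^sub>v r"
proof -
  have "\<forall>i\<in>{..<r}. z $ i * z $ i = 0"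
    using s by (subst (asm) sum_nonneg_eq_0_iff) auto
  then show ?thesis using z by (intro eq_vecI) auto
qed

lemma surj_imp_left_ker:
  fixes M :: "real mat"
  assumes M: "M \<in> carrier_mat r c"
    and S: "\<And>b. b \<in> carrier_vec r \<Longrightarrow> \<exists>v\<in>carrier_vec c. M *\<^sub>v v = b"
    and z: "z \<in> carrier_vec r" and K: "\<forall>j<c. (\<Sum>i<r. M $$ (i,j) * z $ i) = 0"
  shows "z = 0\<^sub>v r"
proof -
  obtain v where v: "v \<in> carrier_vec c" and Mv: "M *\<^sub>v v = z" using S[OF z] by blast
  have "(\<Sum>i<r. z $ i * z $ i) = (\<Sum>i<r. (\<Sum>j<c. M $$ (i,j) * v $ j) * z $ i)"
  proof (rule sum.cong[OF refl])
    fix i assume i: "i \<in> {..<r}"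
    have "z $ i = (M *\<^sub>v v) $ i" using Mv by simp
    also have "\<dots> = (\<Sum>j<c. M $$ (i,j) * v $ j)"
      using M v i by (auto simp: mult_mat_vec_def scalar_prod_def lessThan_atLeast0 intro!: sum.cong)
    finally show "z $ i * z $ i = (\<Sum>j<c. M $$ (i,j) * v $ j) * z $ i" by simp
  qed
  also have "\<dots> = (\<Sum>j<c. v $ j * (\<Sum>i<r. M $$ (i,j) * z $ i))"
    by (simp add: sum_distrib_left sum_distrib_right mult_ac sum.swap[of _ "{..<r}"])
  also have "\<dots> = 0" using K by simp
  finally show ?thesis using sumsq_zero_vec[OF z] by blast
qed

lemma left_ker_imp_surj:
  fixes M :: "real mat"
  assumes M: "M \<in> carrier_mat r c"
    and K: "\<And>z. z \<in> carrier_vec r \<Longrightarrow> \<forall>j<c. (\<Sum>i<r. M $$ (i,j) * z $ i) = 0 \<Longrightarrow> z = 0\<^sub>v r"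
    and b: "b \<in> carrier_vec r"
  shows "\<exists>v\<in>carrier_vec c. M *\<^sub>v v = b"
proof -
  define G where "G = M * M\<^sup>T"
  have G: "G \<in> carrier_mat r r" using M unfolding G_def by auto
  have detG: "det G \<noteq> 0"
  proof
    assume "det G = 0"
    then obtain v where v: "v \<in> carrier_vec r" "v \<noteq> 0\<^sub>v r" "G *\<^sub>v v = 0\<^sub>v r"
      using det_0_iff_vec_prod_zero_field[OF G] by blast
    define w where "w = M\<^sup>T *\<^sub>v v"
    have w: "w \<in> carrier_vec c" using M v unfolding w_def by auto
    have "w \<bullet> w = v \<bullet> (M *\<^sub>v w)"
      unfolding w_def using transpose_vec_mult_scalar[OF M _ v(1), of "M\<^sup>T *\<^sub>v v"] M v by auto
    also have "M *\<^sub>v w = G *\<^sub>v v" unfolding w_def G_def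
      using assoc_mult_mat_vec[of M r c "M\<^sup>T" r v] M v by auto
    finally have "w \<bullet> w = 0" using v by simp
    then have "(\<Sum>j<c. w $ j * w $ j) = 0" using w by (simp add: scalar_prod_def lessThan_atLeast0)
    then have w0: "w = 0\<^sub>v c" using sumsq_zero_vec[OF w] by blast
    have "\<forall>j<c. (\<Sum>i<r. M $$ (i,j) * v $ i) = 0"
    proof (intro allI impI)
      fix j assume j: "j < c"
      have "0 = w $ j" using w0 j by simp
      also have "\<dots> = (\<Sum>i<r. M $$ (i,j) * v $ i)"
        unfolding w_def using M v j
        by (auto simp: mult_mat_vec_def scalar_prod_def lessThan_atLeast0 intro!: sum.cong)
      finally show "(\<Sum>i<r. M $$ (i,j) * v $ i) = 0" by simp
    qed
    then show False using K[OF v(1)] v(2) by blast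
  qed
  have "G \<in> Units (ring_mat TYPE(real) r ())" using det_non_zero_imp_unit[OF G detG] .
  then obtain Gi where Gi: "Gi \<in> carrier_mat r r" and GGi: "G * Gi = 1\<^sub>m r"
    unfolding Units_def by (auto simp: ring_mat_simps)
  define v where "v = M\<^sup>T *\<^sub>v (Gi *\<^sub>v b)"
  have v: "v \<in> carrier_vec c" using M Gi b unfolding v_def by auto
  have "M *\<^sub>v v = G *\<^sub>v (Gi *\<^sub>v b)" unfolding v_def G_def
    using assoc_mult_mat_vec[of M r c "M\<^sup>T" r "Gi *\<^sub>v b"] M Gi b by auto
  also have "\<dots> = (G * Gi) *\<^sub>v b" using assoc_mult_mat_vec[OF G Gi b] by simp
  also have "\<dots> = b" using GGi b by simp
  finally show ?thesis using v by blast
qed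

lemma full_rank_iff_left_ker:
  fixes M :: "real mat"
  assumes M: "M \<in> carrier_mat r c"
  shows "vec_space.rank r M = r \<longleftrightarrow>
    (\<forall>z\<in>carrier_vec r. (\<forall>j<c. (\<Sum>i<r. M $$ (i,j) * z $ i) = 0) \<longrightarrow> z = 0\<^sub>v r)"
proof
  assume R: "vec_space.rank r M = r"
  show "\<forall>z\<in>carrier_vec r. (\<forall>j<c. (\<Sum>i<r. M $$ (i,j) * z $ i) = 0) \<longrightarrow> z = 0\<^sub>v r"
    using surj_imp_left_ker[OF M vec_space.surj_if_rank_full[OF M R]] by blast
next
  assume K: "\<forall>z\<in>carrier_vec r. (\<forall>j<c. (\<Sum>i<r. M $$ (i,j) * z $ i) = 0) \<longrightarrow> z = 0\<^sub>v r"
  show "vec_space.rank r M = r"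
    by (rule vec_space.rank_full_if_surj[OF M]) (use left_ker_imp_surj[OF M] K in blast)
qed

lemma sum_block:
  fixes f :: "nat \<Rightarrow> 'b::comm_monoid_add"
  shows "(\<Sum>i<m*N. f i) = (\<Sum>r<N. \<Sum>q<m. f (r*m+q))"
proof (induction N)
  case (Suc N)
  have "(\<Sum>i<m*Suc N. f i) = (\<Sum>i\<in>{0..<m*N + m}. f i)" by (simp add: algebra_simps lessThan_atLeast0)
  also have "\<dots> = (\<Sum>i\<in>{0..<m*N}. f i) + (\<Sum>i=m*N..<m*N+m. f i)"
    by (rule sum.atLeastLessThan_concat[symmetric]) auto
  also have "(\<Sum>i=m*N..<m*N+m. f i) = (\<Sum>q<m. f (N*m+q))"
    using sum.shift_bounds_nat_ivl[of f 0 "m*N" m] by (simp add: lessThan_atLeast0 algebra_simps)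
  finally show ?case using Suc by (simp add: lessThan_atLeast0)
qed simp

lemma stack_dim[simp]: "dim_vec (stack q k v) = q * k"
  unfolding stack_def by simp

lemma stack_carrier[simp]: "stack q k v \<in> carrier_vec (q * k)"
  unfolding stack_def by simp

lemma stack_index: "i < q * k \<Longrightarrow> stack q k v $ i = v (i div q) $ (i mod q)"
  unfolding stack_def by simp

lemma stack_index': "t < k \<Longrightarrow> c < q \<Longrightarrow> stack q k v $ (t * q + c) = v t $ c"
proof -
  assume t: "t < k" and c: "c < q"
  have "t * q + c < q * k"
  proof -
    have "t * q + c < t * q + q" using c by simp
    also have "\<dots> = (Suc t) * q" by simp
    also have "\<dots> \<le> k * q" using t by (intro mult_right_mono) auto
    finally show ?thesis by (simp add: mult.commute)
  qed
  then show ?thesis using c by (simp add: stack_index)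
qed

lemma hankel_carrier[simp]: "hankel q k T v \<in> carrier_mat (q * k) (T - k + 1)"
  unfolding hankel_def by simp

lemma hankel_dims[simp]: "dim_row (hankel q k T v) = q * k" "dim_col (hankel q k T v) = T - k + 1"
  unfolding hankel_def by simp_all

lemma hankel_index: "i < q * k \<Longrightarrow> j < T - k + 1 \<Longrightarrow> hankel q k T v $$ (i, j) = v (i div q + j) $ (i mod q)"
  unfolding hankel_def by simp

lemma sp_sum: "w \<in> carrier_vec n \<Longrightarrow> v \<bullet> w = (\<Sum>k<n. v $ k * w $ k)"
  unfolding scalar_prod_def by (simp add: lessThan_atLeast0)

lemma mult_mat_vec_index_sum:
  "A \<in> carrier_mat r c \<Longrightarrow> v \<in> carrier_vec c \<Longrightarrow> i < r \<Longrightarrow> (A *\<^sub>v v) $ i = (\<Sum>k<c. A $$ (i,k) * v $ k)"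
  by (simp add: mult_mat_vec_def scalar_prod_def lessThan_atLeast0)

lemma PE_left_ker:
  fixes u :: "nat \<Rightarrow> real vec"
  assumes PE: "persistently_exciting m T N u"
    and g: "\<forall>j\<le>T-N. (\<Sum>r<N. \<Sum>q<m. g r q * u (j + r) $ q) = 0"
    and r: "r < N" and q: "q < m"
  shows "g r q = 0"
proof -
  let ?H = "hankel m N T u"
  have NT: "N \<le> T" and FR: "vec_space.rank (m*N) ?H = m*N"
    using PE unfolding persistently_exciting_def full_row_rank_def by auto
  define z where "z = vec (m*N) (\<lambda>i. g (i div m) (i mod m))"
  have z: "z \<in> carrier_vec (m*N)" unfolding z_def by simp
  have K: "\<forall>j<T-N+1. (\<Sum>i<m*N. ?H $$ (i,j) * z $ i) = 0"
  proof (intro allI impI)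
    fix j assume j: "j < T - N + 1"
    have "(\<Sum>i<m*N. ?H $$ (i,j) * z $ i) = (\<Sum>i<m*N. u (i div m + j) $ (i mod m) * g (i div m) (i mod m))"
      by (rule sum.cong) (use j in \<open>auto simp: hankel_index z_def\<close>)
    also have "\<dots> = (\<Sum>r<N. \<Sum>q<m. u (r + j) $ q * g r q)"
      by (subst sum_block) (intro sum.cong refl, auto)
    also have "\<dots> = (\<Sum>r<N. \<Sum>q<m. g r q * u (j + r) $ q)"
      by (simp add: mult.commute add.commute)
    also have "\<dots> = 0" using g j by auto
    finally show "(\<Sum>i<m*N. ?H $$ (i,j) * z $ i) = 0" .
  qed
  have "z = 0\<^sub>v (m*N)"
    using full_rank_iff_left_ker[OF hankel_carrier] FR K z by blast
  moreover have "r * m + q < m * N"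
  proof -
    have "r * m + q < r * m + m" using q by simp
    also have "\<dots> = Suc r * m" by simp
    also have "\<dots> \<le> N * m" using r by (intro mult_right_mono) auto
    finally show ?thesis by (simp add: mult.commute)
  qed
  ultimately have "z $ (r * m + q) = 0" by simp
  then show ?thesis unfolding z_def using \<open>r * m + q < m * N\<close> q by simp
qed

definition trp :: "real mat \<Rightarrow> nat \<Rightarrow> real vec \<Rightarrow> real vec" where
  "trp A k \<xi> = ((\<lambda>v. A\<^sup>T *\<^sub>v v) ^^ k) \<xi>"

lemma trp_0[simp]: "trp A 0 \<xi> = \<xi>" unfolding trp_def by simp
lemma trp_Suc: "trp A (Suc k) \<xi> = A\<^sup>T *\<^sub>v trp A k \<xi>" unfolding trp_def by simp
lemma trp_Suc_right: "trp A k (A\<^sup>T *\<^sub>v \<xi>) = trp A (Suc k) \<xi>"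
  unfolding trp_def by (simp add: funpow_Suc_right del: funpow.simps)
lemma trp_carrier: "A \<in> carrier_mat n n \<Longrightarrow> \<xi> \<in> carrier_vec n \<Longrightarrow> trp A k \<xi> \<in> carrier_vec n"
  by (induction k) (auto simp: trp_Suc)

lemma ctrb_sum:
  assumes A: "A \<in> carrier_mat n n" and B: "B \<in> carrier_mat n m'" and \<xi>: "\<xi> \<in> carrier_vec n"
    and q: "q < m'"
  shows "(\<Sum>i<n. (A ^\<^sub>m k * B) $$ (i,q) * \<xi> $ i) = (B\<^sup>T *\<^sub>v trp A k \<xi>) $ q"
  using B q
proof (induction k arbitrary: B m')
  case 0
  have "A ^\<^sub>m 0 * B = B" using A "0.prems" by simp
  then show ?case using "0.prems" \<xi> by (simp add: sp_sum[OF \<xi>] mult.commute)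
next
  case (Suc k)
  have AB: "A * B \<in> carrier_mat n m'" using A Suc.prems by simp
  have "A ^\<^sub>m Suc k * B = A ^\<^sub>m k * (A * B)"
    using A Suc.prems by (simp add: assoc_mult_mat[of _ n n _ n _ m'])
  then have "(\<Sum>i<n. (A ^\<^sub>m Suc k * B) $$ (i,q) * \<xi> $ i) = ((A * B)\<^sup>T *\<^sub>v trp A k \<xi>) $ q"
    using Suc.IH[OF AB Suc.prems(2)] by simp
  also have "(A * B)\<^sup>T = B\<^sup>T * A\<^sup>T" using transpose_mult[OF A Suc.prems(1)] .
  also have "(B\<^sup>T * A\<^sup>T) *\<^sub>v trp A k \<xi> = B\<^sup>T *\<^sub>v (A\<^sup>T *\<^sub>v trp A k \<xi>)"
    using Suc.prems A trp_carrier[OF A \<xi>] by (auto intro: assoc_mult_mat_vec)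
  finally show ?case by (simp add: trp_Suc)
qed

lemma ctrb_mat_carrier: "ctrb_mat n m A B \<in> carrier_mat n (n * m)"
  unfolding ctrb_mat_def by simp

lemma controllable_iff:
  assumes A: "A \<in> carrier_mat n n" and B: "B \<in> carrier_mat n m"
  shows "controllable n m A B \<longleftrightarrow>
    (\<forall>\<xi>\<in>carrier_vec n. (\<forall>k<n. \<forall>q<m. (B\<^sup>T *\<^sub>v trp A k \<xi>) $ q = 0) \<longrightarrow> \<xi> = 0\<^sub>v n)"
proof -
  have eq: "(\<forall>j<n*m. (\<Sum>i<n. ctrb_mat n m A B $$ (i,j) * \<xi> $ i) = 0) \<longleftrightarrow>
            (\<forall>k<n. \<forall>q<m. (B\<^sup>T *\<^sub>v trp A k \<xi>) $ q = 0)" if \<xi>: "\<xi> \<in> carrier_vec n" for \<xi>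
  proof
    assume H: "\<forall>j<n*m. (\<Sum>i<n. ctrb_mat n m A B $$ (i,j) * \<xi> $ i) = 0"
    show "\<forall>k<n. \<forall>q<m. (B\<^sup>T *\<^sub>v trp A k \<xi>) $ q = 0"
    proof (intro allI impI)
      fix k q assume k: "k < n" and q: "q < m"
      have j: "k * m + q < n * m"
      proof -
        have "k * m + q < Suc k * m" using q by simp
        also have "\<dots> \<le> n * m" using k by (intro mult_right_mono) auto
        finally show ?thesis .
      qed
      have "(B\<^sup>T *\<^sub>v trp A k \<xi>) $ q = (\<Sum>i<n. (A ^\<^sub>m k * B) $$ (i,q) * \<xi> $ i)"
        using ctrb_sum[OF A B \<xi> q] by simp
      also have "\<dots> = (\<Sum>i<n. ctrb_mat n m A B $$ (i,k*m+q) * \<xi> $ i)"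
        using j q by (intro sum.cong) (auto simp: ctrb_mat_def)
      also have "\<dots> = 0" using H j by simp
      finally show "(B\<^sup>T *\<^sub>v trp A k \<xi>) $ q = 0" .
    qed
  next
    assume H: "\<forall>k<n. \<forall>q<m. (B\<^sup>T *\<^sub>v trp A k \<xi>) $ q = 0"
    show "\<forall>j<n*m. (\<Sum>i<n. ctrb_mat n m A B $$ (i,j) * \<xi> $ i) = 0"
    proof (intro allI impI)
      fix j assume j: "j < n * m"
      then have m0: "m > 0" by (cases m) auto
      have k: "j div m < n" using j by (simp add: less_mult_imp_div_less)
      have q: "j mod m < m" using m0 by simp
      have "(\<Sum>i<n. ctrb_mat n m A B $$ (i,j) * \<xi> $ i) = (\<Sum>i<n. (A ^\<^sub>m (j div m) * B) $$ (i, j mod m) * \<xi> $ i)"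
        using j by (intro sum.cong) (auto simp: ctrb_mat_def)
      also have "\<dots> = 0" using ctrb_sum[OF A B \<xi> q] H k q by simp
      finally show "(\<Sum>i<n. ctrb_mat n m A B $$ (i,j) * \<xi> $ i) = 0" .
    qed
  qed
  show ?thesis unfolding controllable_def
    using full_rank_iff_left_ker[OF ctrb_mat_carrier, of n m A B] eq by auto
qed

lemma sum_if_less:
  fixes f :: "nat \<Rightarrow> 'b::comm_monoid_add"
  assumes "i \<le> N"
  shows "(\<Sum>r<N. if r < i then f r else 0) = (\<Sum>r<i. f r)"
proof -
  have "(\<Sum>r<N. if r < i then f r else 0) = (\<Sum>r\<in>{..<N} \<inter> {r. r < i}. f r)"
    by (simp add: sum.inter_restrict)
  also have "{..<N} \<inter> {r. r < i} = {..<i}" using assms by auto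
  finally show ?thesis .
qed

lemma sum_if_window:
  fixes f :: "nat \<Rightarrow> 'b::comm_monoid_add"
  assumes "i + L \<le> N"
  shows "(\<Sum>r<N. if i \<le> r \<and> r < i + L then f r else 0) = (\<Sum>l<L. f (i + l))"
proof -
  have "(\<Sum>r<N. if i \<le> r \<and> r < i + L then f r else 0) = (\<Sum>r\<in>{..<N} \<inter> {r. i \<le> r \<and> r < i + L}. f r)"
    by (simp add: sum.inter_restrict)
  also have "{..<N} \<inter> {r. i \<le> r \<and> r < i + L} = {i..<i+L}" using assms by auto
  also have "(\<Sum>r\<in>{i..<i+L}. f r) = (\<Sum>l<L. f (i + l))"
    using sum.shift_bounds_nat_ivl[of f 0 i L] by (simp add: lessThan_atLeast0 add.commute)
  finally show ?thesis .
qed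

lemma expansion:
  assumes A: "A \<in> carrier_mat n n" and B: "B \<in> carrier_mat n m"
    and xs: "\<And>t. x t \<in> carrier_vec n" and us: "\<And>t. u t \<in> carrier_vec m"
    and dyn: "\<And>t. x (Suc t) = A *\<^sub>v x t + B *\<^sub>v u t"
    and \<xi>: "\<xi> \<in> carrier_vec n"
  shows "\<xi> \<bullet> x (j + i) = trp A i \<xi> \<bullet> x j +
           (\<Sum>s<i. \<Sum>q<m. (B\<^sup>T *\<^sub>v trp A (i - 1 - s) \<xi>) $ q * u (j + s) $ q)"
  using \<xi>
proof (induction i arbitrary: \<xi>)
  case 0
  then show ?case by simp
next
  case (Suc i)
  have A\<xi>: "A\<^sup>T *\<^sub>v \<xi> \<in> carrier_vec n" using A Suc.prems by simp
  have "\<xi> \<bullet> x (j + Suc i) = \<xi> \<bullet> (A *\<^sub>v x (j+i)) + \<xi> \<bullet> (B *\<^sub>v u (j+i))"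
    using dyn[of "j+i"] A B xs us Suc.prems by (simp add: scalar_prod_add_distrib[of _ n])
  also have "\<xi> \<bullet> (A *\<^sub>v x (j+i)) = (A\<^sup>T *\<^sub>v \<xi>) \<bullet> x (j+i)"
    using transpose_vec_mult_scalar[OF A xs Suc.prems] by simp
  also have "\<xi> \<bullet> (B *\<^sub>v u (j+i)) = (B\<^sup>T *\<^sub>v \<xi>) \<bullet> u (j+i)"
    using transpose_vec_mult_scalar[OF B us Suc.prems] by simp
  also have "\<dots> = (\<Sum>q<m. (B\<^sup>T *\<^sub>v trp A (Suc i - 1 - i) \<xi>) $ q * u (j + i) $ q)"
    using us by (simp add: sp_sum)
  also have "(A\<^sup>T *\<^sub>v \<xi>) \<bullet> x (j+i) = trp A (Suc i) \<xi> \<bullet> x j +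
           (\<Sum>s<i. \<Sum>q<m. (B\<^sup>T *\<^sub>v trp A (Suc i - 1 - s) \<xi>) $ q * u (j + s) $ q)"
  proof -
    have "(A\<^sup>T *\<^sub>v \<xi>) \<bullet> x (j+i) = trp A i (A\<^sup>T *\<^sub>v \<xi>) \<bullet> x j +
           (\<Sum>s<i. \<Sum>q<m. (B\<^sup>T *\<^sub>v trp A (i - 1 - s) (A\<^sup>T *\<^sub>v \<xi>)) $ q * u (j + s) $ q)"
      using Suc.IH[OF A\<xi>] .
    also have "(\<Sum>s<i. \<Sum>q<m. (B\<^sup>T *\<^sub>v trp A (i - 1 - s) (A\<^sup>T *\<^sub>v \<xi>)) $ q * u (j + s) $ q)
        = (\<Sum>s<i. \<Sum>q<m. (B\<^sup>T *\<^sub>v trp A (Suc i - 1 - s) \<xi>) $ q * u (j + s) $ q)"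
    proof (intro sum.cong refl)
      fix s q assume "s \<in> {..<i}"
      then have "Suc (i - 1 - s) = Suc i - 1 - s" by auto
      then show "(B\<^sup>T *\<^sub>v trp A (i - 1 - s) (A\<^sup>T *\<^sub>v \<xi>)) $ q * u (j + s) $ q =
            (B\<^sup>T *\<^sub>v trp A (Suc i - 1 - s) \<xi>) $ q * u (j + s) $ q"
        by (simp add: trp_Suc_right)
    qed
    finally show ?thesis by (simp add: trp_Suc_right)
  qed
  finally show ?case by simp
qed

lemma dependence:
  assumes A: "A \<in> carrier_mat n n" and \<xi>: "\<xi> \<in> carrier_vec n"
  shows "\<exists>\<alpha> d. d \<le> n \<and> \<alpha> d \<noteq> (0::real) \<and>
     (\<forall>t. \<forall>k<n. (\<Sum>i\<le>d. \<alpha> i * trp A (i+t) \<xi> $ k) = 0)"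
proof -
  define W where "W = mat (Suc n) n (\<lambda>(i,k). trp A i \<xi> $ k)"
  have W: "W \<in> carrier_mat (Suc n) n" unfolding W_def by simp
  have "vec_space.rank (Suc n) W \<le> n" using vec_space.rank_le_nc[OF W] .
  then have "vec_space.rank (Suc n) W \<noteq> Suc n" by simp
  then obtain z where z: "z \<in> carrier_vec (Suc n)" and zK: "\<forall>k<n. (\<Sum>i<Suc n. W $$ (i,k) * z $ i) = 0"
    and z0: "z \<noteq> 0\<^sub>v (Suc n)"
    using full_rank_iff_left_ker[OF W] by blast
  define \<alpha> where "\<alpha> i = (if i \<le> n then z $ i else 0)" for i
  obtain i0 where i0: "i0 < Suc n" "z $ i0 \<noteq> 0" using z z0 by (metis eq_vecI carrier_vecD index_zero_vec)
  define S where "S = {i. i \<le> n \<and> \<alpha> i \<noteq> 0}"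
  have finS: "finite S" unfolding S_def by simp
  have i0S: "i0 \<in> S" using i0 unfolding S_def \<alpha>_def by auto
  define d where "d = Max S"
  have dS: "d \<in> S" unfolding d_def using finS i0S by (intro Max_in) auto
  have dmax: "\<And>i. i \<le> n \<Longrightarrow> d < i \<Longrightarrow> \<alpha> i = 0"
  proof (rule ccontr)
    fix i assume "i \<le> n" "d < i" "\<alpha> i \<noteq> 0"
    then have "i \<in> S" unfolding S_def by auto
    then have "i \<le> d" unfolding d_def using finS by simp
    then show False using \<open>d < i\<close> by simp
  qed
  have dn: "d \<le> n" and ad: "\<alpha> d \<noteq> 0" using dS unfolding S_def by auto
  have base: "(\<Sum>i\<le>d. \<alpha> i * trp A i \<xi> $ k) = 0" if k: "k < n" for k
  proof -
    have "(\<Sum>i\<le>d. \<alpha> i * trp A i \<xi> $ k) = (\<Sum>i\<le>n. \<alpha> i * trp A i \<xi> $ k)"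
      by (rule sum.mono_neutral_left) (use dn dmax in auto)
    also have "\<dots> = (\<Sum>i<Suc n. W $$ (i,k) * z $ i)"
      unfolding lessThan_Suc_atMost using k by (intro sum.cong) (auto simp: W_def \<alpha>_def)
    also have "\<dots> = 0" using zK k by simp
    finally show ?thesis .
  qed
  have "\<forall>k<n. (\<Sum>i\<le>d. \<alpha> i * trp A (i+t) \<xi> $ k) = 0" for t
  proof (induction t)
    case 0
    then show ?case using base by simp
  next
    case (Suc t)
    show ?case
    proof (intro allI impI)
      fix k assume k: "k < n"
      have "(\<Sum>i\<le>d. \<alpha> i * trp A (i + Suc t) \<xi> $ k) =
            (\<Sum>i\<le>d. \<alpha> i * (\<Sum>k'<n. A $$ (k',k) * trp A (i+t) \<xi> $ k'))"
        using k A trp_carrier[OF A \<xi>]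
        by (intro sum.cong refl) (auto simp: trp_Suc sp_sum[OF trp_carrier[OF A \<xi>]] intro!: sum.cong)
      also have "\<dots> = (\<Sum>k'<n. A $$ (k',k) * (\<Sum>i\<le>d. \<alpha> i * trp A (i+t) \<xi> $ k'))"
        by (simp add: sum_distrib_left mult_ac sum.swap[of _ "{..d}"])
      also have "\<dots> = 0" using Suc.IH by simp
      finally show "(\<Sum>i\<le>d. \<alpha> i * trp A (i + Suc t) \<xi> $ k) = 0" .
    qed
  qed
  then show ?thesis using dn ad by blast
qed

lemma sum_atMost_split_last:
  fixes f :: "nat \<Rightarrow> 'b::comm_monoid_add"
  shows "(\<Sum>i\<le>d. f i) = (\<Sum>i<d. f i) + f d"
  by (simp add: lessThan_Suc_atMost[symmetric])

lemma key_left_ker: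
  fixes x u :: "nat \<Rightarrow> real vec" and \<eta> :: "nat \<Rightarrow> nat \<Rightarrow> real"
  assumes A: "A \<in> carrier_mat n n" and B: "B \<in> carrier_mat n m"
    and ctr: "controllable n m A B"
    and PE: "persistently_exciting m T (n + L) u"
    and xs: "\<And>t. x t \<in> carrier_vec n" and us: "\<And>t. u t \<in> carrier_vec m"
    and dyn: "\<And>t. x (Suc t) = A *\<^sub>v x t + B *\<^sub>v u t"
    and \<xi>: "\<xi> \<in> carrier_vec n"
    and rel: "\<forall>j \<le> T - L. \<xi> \<bullet> x j + (\<Sum>l<L. \<Sum>q<m. \<eta> l q * u (j+l) $ q) = 0"
  shows "\<xi> = 0\<^sub>v n \<and> (\<forall>l<L. \<forall>q<m. \<eta> l q = 0)"
proof -
  define N where "N = n + L"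
  have NT: "N \<le> T" using PE unfolding persistently_exciting_def N_def by simp
  obtain \<alpha> d where dn: "d \<le> n" and ad: "\<alpha> d \<noteq> (0::real)"
    and dep: "\<forall>t. \<forall>k<n. (\<Sum>i\<le>d. \<alpha> i * trp A (i+t) \<xi> $ k) = 0"
    using dependence[OF A \<xi>] by blast
  define \<beta> where "\<beta> k q = (B\<^sup>T *\<^sub>v trp A k \<xi>) $ q" for k q
  have \<beta>_sum: "\<beta> k q = (\<Sum>k'<n. B $$ (k',q) * trp A k \<xi> $ k')" if q: "q < m" for k q
    unfolding \<beta>_def using q B by (auto simp: sp_sum[OF trp_carrier[OF A \<xi>]] intro!: sum.cong)
  have betaDep: "(\<Sum>i\<le>d. \<alpha> i * \<beta> (i+t) q) = 0" if q: "q < m" for t q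
  proof -
    have "(\<Sum>i\<le>d. \<alpha> i * \<beta> (i+t) q) = (\<Sum>k'<n. B $$ (k',q) * (\<Sum>i\<le>d. \<alpha> i * trp A (i+t) \<xi> $ k'))"
      using q by (simp add: \<beta>_sum sum_distrib_left mult_ac sum.swap[of _ "{..d}"])
    also have "\<dots> = 0" using dep by simp
    finally show ?thesis .
  qed
  define g where "g r q = (\<Sum>i\<le>d. \<alpha> i * ((if r < i then \<beta> (i-1-r) q else 0)
        + (if i \<le> r \<and> r < i + L then \<eta> (r-i) q else 0)))" for r q
  have gsum: "(\<Sum>r<N. \<Sum>q<m. g r q * u (j + r) $ q) = 0" if j: "j \<le> T - N" for j
  proof -
    have each: "(\<Sum>r<N. \<Sum>q<m. ((if r < i then \<beta> (i-1-r) q else 0)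
        + (if i \<le> r \<and> r < i + L then \<eta> (r-i) q else 0)) * u (j + r) $ q)
        = - (trp A i \<xi> \<bullet> x j)" if i: "i \<le> d" for i
    proof -
      have "(\<Sum>r<N. \<Sum>q<m. ((if r < i then \<beta> (i-1-r) q else 0)
        + (if i \<le> r \<and> r < i + L then \<eta> (r-i) q else 0)) * u (j + r) $ q)
        = (\<Sum>r<N. if r < i then (\<Sum>q<m. \<beta> (i-1-r) q * u (j + r) $ q) else 0)
          + (\<Sum>r<N. if i \<le> r \<and> r < i + L then (\<Sum>q<m. \<eta> (r-i) q * u (j + r) $ q) else 0)"
        unfolding sum.distrib[symmetric]
        by (intro sum.cong refl) (auto simp: distrib_right sum.distrib)
      also have "\<dots> = (\<Sum>s<i. \<Sum>q<m. \<beta> (i-1-s) q * u (j + s) $ q)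
          + (\<Sum>l<L. \<Sum>q<m. \<eta> l q * u ((j + i) + l) $ q)"
        using i dn unfolding N_def
        by (simp add: sum_if_less sum_if_window add.assoc)
      also have "(\<Sum>s<i. \<Sum>q<m. \<beta> (i-1-s) q * u (j + s) $ q) = \<xi> \<bullet> x (j + i) - trp A i \<xi> \<bullet> x j"
        using expansion[where x=x and u=u and j=j and i=i, OF A B xs us dyn \<xi>] unfolding \<beta>_def by simp
      also have "(\<Sum>l<L. \<Sum>q<m. \<eta> l q * u ((j + i) + l) $ q) = - (\<xi> \<bullet> x (j + i))"
      proof -
        have "j + i \<le> T - L" using j i dn NT unfolding N_def by simp
        then have "\<xi> \<bullet> x (j + i) + (\<Sum>l<L. \<Sum>q<m. \<eta> l q * u ((j + i) + l) $ q) = 0"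
          using rel by blast
        then show ?thesis by linarith
      qed
      finally show ?thesis by simp
    qed
    have "(\<Sum>r<N. \<Sum>q<m. g r q * u (j + r) $ q) = (\<Sum>i\<le>d. \<alpha> i * (\<Sum>r<N. \<Sum>q<m. ((if r < i then \<beta> (i-1-r) q else 0)
        + (if i \<le> r \<and> r < i + L then \<eta> (r-i) q else 0)) * u (j + r) $ q))"
    proof -
      have "(\<Sum>r<N. \<Sum>q<m. g r q * u (j + r) $ q) = (\<Sum>r<N. \<Sum>q<m. \<Sum>i\<le>d. \<alpha> i * (((if r < i then \<beta> (i-1-r) q else 0)
        + (if i \<le> r \<and> r < i + L then \<eta> (r-i) q else 0)) * u (j + r) $ q))"
        unfolding g_def sum_distrib_right by (simp add: mult.assoc)
      also have "\<dots> = (\<Sum>i\<le>d. \<Sum>r<N. \<Sum>q<m. \<alpha> i * (((if r < i then \<beta> (i-1-r) q else 0)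
        + (if i \<le> r \<and> r < i + L then \<eta> (r-i) q else 0)) * u (j + r) $ q))"
        by (simp only: sum.swap[of _ "{..<m}" "{..d}"] sum.swap[of _ "{..<N}" "{..d}"])
      finally show ?thesis by (simp add: sum_distrib_left)
    qed
    also have "\<dots> = (\<Sum>i\<le>d. \<alpha> i * - (trp A i \<xi> \<bullet> x j))"
      using each by simp
    also have "\<dots> = - (\<Sum>k<n. x j $ k * (\<Sum>i\<le>d. \<alpha> i * trp A i \<xi> $ k))"
      by (simp add: sp_sum[OF xs] sum_distrib_left sum_negf mult_ac sum.swap[of _ "{..d}"])
    also have "\<dots> = 0"
    proof -
      have "\<forall>k<n. (\<Sum>i\<le>d. \<alpha> i * trp A i \<xi> $ k) = 0" using spec[OF dep, of 0] by simp
      then show ?thesis by simp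
    qed
    finally show ?thesis .
  qed
  have gz: "g r q = 0" if "r < N" "q < m" for r q
    by (rule PE_left_ker[OF PE[folded N_def]]) (use gsum that in auto)
  have etaz: "\<forall>q<m. \<eta> l q = 0" if l: "l < L" for l
    using l
  proof (induction "L - l" arbitrary: l rule: less_induct)
    case less
    show ?case
    proof (intro allI impI)
      fix q assume q: "q < m"
      have "g (d + l) q = (\<Sum>i<d. \<alpha> i * ((if d + l < i then \<beta> (i-1-(d+l)) q else 0)
        + (if i \<le> d + l \<and> d + l < i + L then \<eta> (d + l - i) q else 0))) + \<alpha> d * \<eta> l q"
        unfolding g_def sum_atMost_split_last using less.prems by simp
      also have "(\<Sum>i<d. \<alpha> i * ((if d + l < i then \<beta> (i-1-(d+l)) q else 0)
        + (if i \<le> d + l \<and> d + l < i + L then \<eta> (d + l - i) q else 0))) = 0"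
      proof (rule sum.neutral, intro ballI)
        fix i assume i: "i \<in> {..<d}"
        have "\<eta> (d + l - i) q = 0" if "d + l < i + L"
          using less.hyps[of "d + l - i"] i that q by auto
        then show "\<alpha> i * ((if d + l < i then \<beta> (i-1-(d+l)) q else 0)
          + (if i \<le> d + l \<and> d + l < i + L then \<eta> (d + l - i) q else 0)) = 0"
          using i by auto
      qed
      finally have "g (d + l) q = \<alpha> d * \<eta> l q" by simp
      moreover have "g (d + l) q = 0" using gz[of "d + l" q] less.prems dn q unfolding N_def by simp
      ultimately show "\<eta> l q = 0" using ad by simp
    qed
  qed
  have betaz: "\<forall>q<m. \<beta> k q = 0" for k
  proof (induction k rule: less_induct)
    case (less k)
    show ?case
    proof (intro allI impI)
      fix q assume q: "q < m"
      show "\<beta> k q = 0"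
      proof (cases "k < d")
        case True
        define r where "r = d - 1 - k"
        have r: "r < N" using True dn unfolding r_def N_def by simp
        have "g r q = (\<Sum>i<d. \<alpha> i * (if r < i then \<beta> (i-1-r) q else 0)) + \<alpha> d * \<beta> k q"
        proof -
          have "g r q = (\<Sum>i\<le>d. \<alpha> i * (if r < i then \<beta> (i-1-r) q else 0))"
            unfolding g_def using etaz q by (intro sum.cong refl) auto
          also have "\<dots> = (\<Sum>i<d. \<alpha> i * (if r < i then \<beta> (i-1-r) q else 0)) + \<alpha> d * \<beta> k q"
            unfolding sum_atMost_split_last using True by (simp add: r_def)
          finally show ?thesis .
        qed
        also have "(\<Sum>i<d. \<alpha> i * (if r < i then \<beta> (i-1-r) q else 0)) = 0"
        proof (rule sum.neutral, intro ballI)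
          fix i assume i: "i \<in> {..<d}"
          have "\<beta> (i-1-r) q = 0" if "r < i"
            using less.IH[of "i-1-r"] i that q True unfolding r_def by auto
          then show "\<alpha> i * (if r < i then \<beta> (i-1-r) q else 0) = 0" by auto
        qed
        finally have "g r q = \<alpha> d * \<beta> k q" by simp
        then show ?thesis using gz[OF r q] ad by simp
      next
        case False
        have "0 = (\<Sum>i\<le>d. \<alpha> i * \<beta> (i + (k - d)) q)" using betaDep[OF q] by simp
        also have "\<dots> = (\<Sum>i<d. \<alpha> i * \<beta> (i + (k - d)) q) + \<alpha> d * \<beta> k q"
          unfolding sum_atMost_split_last using False by simp
        also have "(\<Sum>i<d. \<alpha> i * \<beta> (i + (k - d)) q) = 0"
          by (rule sum.neutral) (use less.IH q False in auto)
        finally show ?thesis using ad by simp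
      qed
    qed
  qed
  have "\<xi> = 0\<^sub>v n"
    using ctr[unfolded controllable_iff[OF A B]] \<xi> betaz unfolding \<beta>_def by blast
  then show ?thesis using etaz by blast
qed

definition comb :: "nat \<Rightarrow> real vec \<Rightarrow> (nat \<Rightarrow> real vec) \<Rightarrow> nat \<Rightarrow> real vec" where
  "comb k c w t = vec k (\<lambda>q. \<Sum>j<dim_vec c. c $ j * w (t + j) $ q)"

lemma comb_carrier[simp]: "comb k c w t \<in> carrier_vec k" unfolding comb_def by simp
lemma comb_dim[simp]: "dim_vec (comb k c w t) = k" unfolding comb_def by simp
lemma comb_index: "q < k \<Longrightarrow> comb k c w t $ q = (\<Sum>j<dim_vec c. c $ j * w (t + j) $ q)"
  unfolding comb_def by simp

lemma comb_mat:
  assumes M: "M \<in> carrier_mat r k" and w: "\<And>t. w t \<in> carrier_vec k"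
  shows "comb r c (\<lambda>t. M *\<^sub>v w t) t = M *\<^sub>v comb k c w t"
proof (rule eq_vecI)
  fix i assume "i < dim_vec (M *\<^sub>v comb k c w t)"
  then have i: "i < r" using M by simp
  have "comb r c (\<lambda>t. M *\<^sub>v w t) t $ i = (\<Sum>j<dim_vec c. c $ j * (\<Sum>l<k. M $$ (i,l) * w (t+j) $ l))"
  proof -
    have "\<And>s. (M *\<^sub>v w s) $ i = (\<Sum>l<k. M $$ (i,l) * w s $ l)"
      using mult_mat_vec_index_sum[OF M w i] by simp
    then show ?thesis using i by (simp add: comb_index)
  qed
  also have "\<dots> = (\<Sum>l<k. M $$ (i,l) * (\<Sum>j<dim_vec c. c $ j * w (t+j) $ l))"
    by (simp add: sum_distrib_left mult_ac sum.swap[of _ "{..<dim_vec c}" "{..<k}"])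
  also have "\<dots> = (M *\<^sub>v comb k c w t) $ i"
    using mult_mat_vec_index_sum[OF M comb_carrier i, of c w t] by (simp add: comb_index)
  finally show "comb r c (\<lambda>t. M *\<^sub>v w t) t $ i = (M *\<^sub>v comb k c w t) $ i" .
qed (use M in simp)

lemma comb_add:
  assumes v: "\<And>t. v t \<in> carrier_vec k" and w: "\<And>t. w t \<in> carrier_vec k"
  shows "comb k c (\<lambda>t. v t + w t) t = comb k c v t + comb k c w t"
proof (rule eq_vecI)
  fix i assume "i < dim_vec (comb k c v t + comb k c w t)"
  then have i: "i < k" by simp
  have "\<And>s. (v s + w s) $ i = v s $ i + w s $ i" using v w i by (metis carrier_vecD index_add_vec(1))
  then show "comb k c (\<lambda>t. v t + w t) t $ i = (comb k c v t + comb k c w t) $ i"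
    using i by (simp add: comb_index sum.distrib distrib_left)
qed simp

lemma comb_behavior:
  assumes bh: "(u, y) \<in> behavior n m p A B C D"
    and AB: "A \<in> carrier_mat n n" "B \<in> carrier_mat n m" "C \<in> carrier_mat p n" "D \<in> carrier_mat p m"
  obtains x where "\<forall>t. x t \<in> carrier_vec n \<and> x (Suc t) = A *\<^sub>v x t + B *\<^sub>v u t \<and> y t = C *\<^sub>v x t + D *\<^sub>v u t"
    and "\<forall>t. comb n c x (Suc t) = A *\<^sub>v comb n c x t + B *\<^sub>v comb m c u t"
    and "\<forall>t. comb p c y t = C *\<^sub>v comb n c x t + D *\<^sub>v comb m c u t"
    and "(comb m c u, comb p c y) \<in> behavior n m p A B C D"
proof -
  obtain x where x: "\<forall>t. x t \<in> carrier_vec n \<and> x (Suc t) = A *\<^sub>v x t + B *\<^sub>v u t \<and> y t = C *\<^sub>v x t + D *\<^sub>v u t"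
    and us: "\<forall>t. u t \<in> carrier_vec m"
    using bh unfolding behavior_def by auto
  have xs: "\<And>t. x t \<in> carrier_vec n" using x by blast
  have us': "\<And>t. u t \<in> carrier_vec m" using us by blast
  have dyn: "comb n c x (Suc t) = A *\<^sub>v comb n c x t + B *\<^sub>v comb m c u t" for t
  proof -
    have "comb n c x (Suc t) = comb n c (\<lambda>s. x (Suc s)) t" unfolding comb_def by simp
    also have "\<dots> = comb n c (\<lambda>s. A *\<^sub>v x s + B *\<^sub>v u s) t" using x by simp
    also have "\<dots> = comb n c (\<lambda>s. A *\<^sub>v x s) t + comb n c (\<lambda>s. B *\<^sub>v u s) t"
      by (rule comb_add) (use AB xs us' in auto)
    also have "\<dots> = A *\<^sub>v comb n c x t + B *\<^sub>v comb m c u t"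
      using comb_mat[OF AB(1) xs] comb_mat[OF AB(2) us'] by simp
    finally show ?thesis .
  qed
  have out: "comb p c y t = C *\<^sub>v comb n c x t + D *\<^sub>v comb m c u t" for t
  proof -
    have "y = (\<lambda>s. C *\<^sub>v x s + D *\<^sub>v u s)" using x by auto
    then have "comb p c y t = comb p c (\<lambda>s. C *\<^sub>v x s + D *\<^sub>v u s) t" by simp
    also have "\<dots> = comb p c (\<lambda>s. C *\<^sub>v x s) t + comb p c (\<lambda>s. D *\<^sub>v u s) t"
      by (rule comb_add) (use AB xs us' in auto)
    also have "\<dots> = C *\<^sub>v comb n c x t + D *\<^sub>v comb m c u t"
      using comb_mat[OF AB(3) xs] comb_mat[OF AB(4) us'] by simp
    finally show ?thesis .
  qed
  have "(comb m c u, comb p c y) \<in> behavior n m p A B C D"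
    unfolding behavior_def
  proof (intro CollectI case_prodI conjI allI)
    fix t show "comb m c u t \<in> carrier_vec m" "comb p c y t \<in> carrier_vec p" by simp_all
  next
    show "\<exists>x'. \<forall>t. x' t \<in> carrier_vec n \<and> x' (Suc t) = A *\<^sub>v x' t + B *\<^sub>v comb m c u t \<and>
                comb p c y t = C *\<^sub>v x' t + D *\<^sub>v comb m c u t"
      by (rule exI[of _ "comb n c x"]) (use dyn out in simp)
  qed
  then show ?thesis using that x dyn out by blast
qed

lemma stack_cong: "(\<And>t. t < k \<Longrightarrow> v t = w t) \<Longrightarrow> stack q k v = stack q k w"
proof -
  assume H: "\<And>t. t < k \<Longrightarrow> v t = w t"
  show ?thesis
  proof (rule eq_vecI)
    fix i assume "i < dim_vec (stack q k w)"
    then have i: "i < q * k" by simp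
    then have "i div q < k" by (simp add: less_mult_imp_div_less mult.commute)
    then show "stack q k v $ i = stack q k w $ i" using i H by (simp add: stack_index)
  qed simp
qed

lemma hankel_cong:
  assumes "k \<le> T" "\<And>t. t < T \<Longrightarrow> v t = w t"
  shows "hankel q k T v = hankel q k T w"
proof (rule eq_matI)
  fix i j assume i: "i < dim_row (hankel q k T w)" and j: "j < dim_col (hankel q k T w)"
  then have "i < q * k" "j < T - k + 1" by auto
  moreover have "i div q < k" using \<open>i < q * k\<close> by (simp add: less_mult_imp_div_less mult.commute)
  ultimately have "i div q + j < T" using assms(1) by linarith
  then show "hankel q k T v $$ (i,j) = hankel q k T w $$ (i,j)"
    using \<open>i < q * k\<close> \<open>j < T - k + 1\<close> assms(2) by (simp add: hankel_index)
qed auto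

lemma comb_traj:
  assumes AB: "A \<in> carrier_mat n n" "B \<in> carrier_mat n m" "C \<in> carrier_mat p n" "D \<in> carrier_mat p m"
    and xs: "\<And>t. x t \<in> carrier_vec n" and us: "\<And>t. u t \<in> carrier_vec m"
    and dyn: "\<And>t. x (Suc t) = A *\<^sub>v x t + B *\<^sub>v u t"
    and out: "\<And>t. y t = C *\<^sub>v x t + D *\<^sub>v u t"
  shows "comb n c x (Suc t) = A *\<^sub>v comb n c x t + B *\<^sub>v comb m c u t"
    and "comb p c y t = C *\<^sub>v comb n c x t + D *\<^sub>v comb m c u t"
proof -
  have "comb n c x (Suc t) = comb n c (\<lambda>s. x (Suc s)) t" unfolding comb_def by simp
  also have "\<dots> = comb n c (\<lambda>s. A *\<^sub>v x s + B *\<^sub>v u s) t" using dyn by simp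
  also have "\<dots> = comb n c (\<lambda>s. A *\<^sub>v x s) t + comb n c (\<lambda>s. B *\<^sub>v u s) t"
    by (rule comb_add) (use AB xs us in auto)
  also have "\<dots> = A *\<^sub>v comb n c x t + B *\<^sub>v comb m c u t"
    using comb_mat[OF AB(1) xs] comb_mat[OF AB(2) us] by simp
  finally show "comb n c x (Suc t) = A *\<^sub>v comb n c x t + B *\<^sub>v comb m c u t" .
  have "y = (\<lambda>s. C *\<^sub>v x s + D *\<^sub>v u s)" using out by auto
  then have "comb p c y t = comb p c (\<lambda>s. C *\<^sub>v x s + D *\<^sub>v u s) t" by simp
  also have "\<dots> = comb p c (\<lambda>s. C *\<^sub>v x s) t + comb p c (\<lambda>s. D *\<^sub>v u s) t"
    by (rule comb_add) (use AB xs us in auto)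
  also have "\<dots> = C *\<^sub>v comb n c x t + D *\<^sub>v comb m c u t"
    using comb_mat[OF AB(3) xs] comb_mat[OF AB(4) us] by simp
  finally show "comb p c y t = C *\<^sub>v comb n c x t + D *\<^sub>v comb m c u t" .
qed

lemma append_rows_index:
  assumes A: "A \<in> carrier_mat r1 c" and B: "B \<in> carrier_mat r2 c" and i: "i < r1 + r2" and j: "j < c"
  shows "(A @\<^sub>r B) $$ (i,j) = (if i < r1 then A $$ (i,j) else B $$ (i - r1, j))"
  unfolding append_rows_def using A B i j by (subst index_mat_four_block) auto

lemma sum_split_add:
  fixes f :: "nat \<Rightarrow> 'b::comm_monoid_add"
  shows "(\<Sum>i<a+b. f i) = (\<Sum>i<a. f i) + (\<Sum>i<b. f (a + i))"
proof -
  have "(\<Sum>i<a+b. f i) = (\<Sum>i\<in>{0..<a}. f i) + (\<Sum>i=a..<a+b. f i)"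
    unfolding lessThan_atLeast0 by (rule sum.atLeastLessThan_concat[symmetric]) auto
  also have "(\<Sum>i=a..<a+b. f i) = (\<Sum>i<b. f (a + i))"
    using sum.shift_bounds_nat_ivl[of f 0 a b] by (simp add: lessThan_atLeast0 add.commute)
  finally show ?thesis by (simp add: lessThan_atLeast0)
qed

lemma data_mult:
  assumes LT: "L \<le> T" and c: "c \<in> carrier_vec (T - L + 1)"
  shows "(hankel m L T u @\<^sub>r hankel p L T y) *\<^sub>v c = stack m L (comb m c u) @\<^sub>v stack p L (comb p c y)"
proof (rule eq_vecI)
  have Hd: "hankel m L T u @\<^sub>r hankel p L T y \<in> carrier_mat (m * L + p * L) (T - L + 1)"
    by (rule carrier_append_rows) auto
  fix i assume "i < dim_vec (stack m L (comb m c u) @\<^sub>v stack p L (comb p c y))"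
  then have i: "i < m * L + p * L" by simp
  have "((hankel m L T u @\<^sub>r hankel p L T y) *\<^sub>v c) $ i =
      (\<Sum>j<T - L + 1. (hankel m L T u @\<^sub>r hankel p L T y) $$ (i,j) * c $ j)"
    using mult_mat_vec_index_sum[OF Hd c i] .
  also have "\<dots> = (stack m L (comb m c u) @\<^sub>v stack p L (comb p c y)) $ i"
  proof (cases "i < m * L")
    case True
    then have "(stack m L (comb m c u) @\<^sub>v stack p L (comb p c y)) $ i = comb m c u (i div m) $ (i mod m)"
      using i by (simp add: stack_index)
    also have "\<dots> = (\<Sum>j<T - L + 1. c $ j * u (i div m + j) $ (i mod m))"
    proof -
      have "m > 0" using True by (cases m) auto
      then show ?thesis using True c by (subst comb_index) auto
    qed
    moreover have "(\<Sum>j<T - L + 1. (hankel m L T u @\<^sub>r hankel p L T y) $$ (i,j) * c $ j)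
        = (\<Sum>j<T - L + 1. c $ j * u (i div m + j) $ (i mod m))"
      by (rule sum.cong[OF refl]) (use True i in \<open>simp add: append_rows_index[OF hankel_carrier hankel_carrier] hankel_index\<close>)
    ultimately show ?thesis by simp
  next
    case False
    then have "(stack m L (comb m c u) @\<^sub>v stack p L (comb p c y)) $ i = comb p c y ((i - m*L) div p) $ ((i - m*L) mod p)"
      using i by (simp add: stack_index)
    also have "\<dots> = (\<Sum>j<T - L + 1. c $ j * y ((i - m*L) div p + j) $ ((i - m*L) mod p))"
    proof -
      have "p > 0" using False i by (cases p) auto
      then show ?thesis using False i c by (subst comb_index) auto
    qed
    moreover have "(\<Sum>j<T - L + 1. (hankel m L T u @\<^sub>r hankel p L T y) $$ (i,j) * c $ j)
        = (\<Sum>j<T - L + 1. c $ j * y ((i - m*L) div p + j) $ ((i - m*L) mod p))"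
      by (rule sum.cong[OF refl]) (use False i in \<open>simp add: append_rows_index[OF hankel_carrier hankel_carrier] hankel_index\<close>)
    ultimately show ?thesis by simp
  qed
  finally show "((hankel m L T u @\<^sub>r hankel p L T y) *\<^sub>v c) $ i =
      (stack m L (comb m c u) @\<^sub>v stack p L (comb p c y)) $ i" .
qed (simp add: append_rows_def)

lemma rb_extract:
  assumes rb: "stack m k u @\<^sub>v stack p k y \<in> restricted_behavior n m p k A B C D"
    and uc: "\<forall>t<k. u t \<in> carrier_vec m" and yc: "\<forall>t<k. y t \<in> carrier_vec p"
  obtains u' y' where "(u', y') \<in> behavior n m p A B C D" "\<forall>t<k. u' t = u t" "\<forall>t<k. y' t = y t"
proof -
  obtain u' y' where eq: "stack m k u @\<^sub>v stack p k y = stack m k u' @\<^sub>v stack p k y'"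
    and bh: "(u', y') \<in> behavior n m p A B C D"
    using rb unfolding restricted_behavior_def by blast
  have u'c: "\<forall>t. u' t \<in> carrier_vec m" and y'c: "\<forall>t. y' t \<in> carrier_vec p"
    using bh unfolding behavior_def by auto
  have "u' t = u t" if t: "t < k" for t
  proof (rule eq_vecI)
    fix q assume "q < dim_vec (u t)"
    then have q: "q < m" using uc t by auto
    have ik: "t * m + q < m * k"
    proof -
      have "t * m + q < Suc t * m" using q by simp
      also have "\<dots> \<le> k * m" using t by (intro mult_right_mono) auto
      finally show ?thesis by (simp add: mult.commute)
    qed
    have "(stack m k u @\<^sub>v stack p k y) $ (t*m+q) = (stack m k u' @\<^sub>v stack p k y') $ (t*m+q)"
      using eq by simp
    then show "u' t $ q = u t $ q" using ik q t by (simp add: stack_index' stack_index)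
  qed (use uc u'c t in auto)
  moreover have "y' t = y t" if t: "t < k" for t
  proof (rule eq_vecI)
    fix q assume "q < dim_vec (y t)"
    then have q: "q < p" using yc t by auto
    have ik: "t * p + q < p * k"
    proof -
      have "t * p + q < Suc t * p" using q by simp
      also have "\<dots> \<le> k * p" using t by (intro mult_right_mono) auto
      finally show ?thesis by (simp add: mult.commute)
    qed
    have "(stack m k u @\<^sub>v stack p k y) $ (m*k + (t*p+q)) = (stack m k u' @\<^sub>v stack p k y') $ (m*k + (t*p+q))"
      using eq by simp
    then show "y' t $ q = y t $ q" using ik q t by (simp add: stack_index' stack_index)
  qed (use yc y'c t in auto)
  ultimately show ?thesis using that bh by blast
qed

lemma PE_cong:
  assumes "\<And>t. t < T \<Longrightarrow> v t = w t"
  shows "persistently_exciting q T k v \<longleftrightarrow> persistently_exciting q T k w"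
  unfolding persistently_exciting_def using hankel_cong[of k T v w q] assms by auto

lemma if_direction:
  assumes PE: "persistently_exciting m T (n + L) u"
    and LT: "L \<le> T"
    and uc: "\<forall>t<T. u t \<in> carrier_vec m"
  shows "universal n m p T L u"
  unfolding universal_def
proof (intro allI impI)
  fix A B C D and y :: "nat \<Rightarrow> real vec"
  assume Mc: "(A, B, C, D) \<in> M_cont n m p"
    and yc: "\<forall>t<T. y t \<in> carrier_vec p"
    and dat: "stack m T u @\<^sub>v stack p T y \<in> restricted_behavior n m p T A B C D"
  have A: "A \<in> carrier_mat n n" and B: "B \<in> carrier_mat n m" and C: "C \<in> carrier_mat p n"
    and D: "D \<in> carrier_mat p m" and ctr: "controllable n m A B"
    using Mc unfolding M_cont_def by auto
  obtain u' y' where bh: "(u', y') \<in> behavior n m p A B C D"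
    and uu: "\<forall>t<T. u' t = u t" and yy: "\<forall>t<T. y' t = y t"
    using rb_extract[OF dat uc yc] by blast
  obtain x where x: "\<forall>t. x t \<in> carrier_vec n \<and> x (Suc t) = A *\<^sub>v x t + B *\<^sub>v u' t \<and> y' t = C *\<^sub>v x t + D *\<^sub>v u' t"
    and u'c: "\<forall>t. u' t \<in> carrier_vec m" and y'c: "\<forall>t. y' t \<in> carrier_vec p"
  proof -
    have "(\<forall>t. u' t \<in> carrier_vec m \<and> y' t \<in> carrier_vec p) \<and> (\<exists>x. \<forall>t. x t \<in> carrier_vec n \<and> x (Suc t) = A *\<^sub>v x t + B *\<^sub>v u' t \<and> y' t = C *\<^sub>v x t + D *\<^sub>v u' t)"
      using bh unfolding behavior_def by simp
    then show ?thesis using that by blast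
  qed
  have xs: "\<And>t. x t \<in> carrier_vec n" and dyn: "\<And>t. x (Suc t) = A *\<^sub>v x t + B *\<^sub>v u' t"
    and out: "\<And>t. y' t = C *\<^sub>v x t + D *\<^sub>v u' t" and us: "\<And>t. u' t \<in> carrier_vec m"
    using x u'c by auto
  have PE': "persistently_exciting m T (n + L) u'" using PE PE_cong[of T u' u] uu by auto
  have Hd_eq: "hankel m L T u @\<^sub>r hankel p L T y = hankel m L T u' @\<^sub>r hankel p L T y'"
    using hankel_cong[OF LT, of u u' m] hankel_cong[OF LT, of y y' p] uu yy by auto
  have dimHd: "dim_col (hankel m L T u' @\<^sub>r hankel p L T y') = T - L + 1"
    by (simp add: append_rows_def)
  show "restricted_behavior n m p L A B C D = mat_image (hankel m L T u @\<^sub>r hankel p L T y)"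
    unfolding Hd_eq
  proof
    show "mat_image (hankel m L T u' @\<^sub>r hankel p L T y') \<subseteq> restricted_behavior n m p L A B C D"
    proof
      fix w assume "w \<in> mat_image (hankel m L T u' @\<^sub>r hankel p L T y')"
      then obtain c where c: "c \<in> carrier_vec (T - L + 1)"
        and w: "w = (hankel m L T u' @\<^sub>r hankel p L T y') *\<^sub>v c"
        unfolding mat_image_def dimHd by blast
      have "(comb m c u', comb p c y') \<in> behavior n m p A B C D"
        unfolding behavior_def
      proof (intro CollectI case_prodI conjI allI)
        fix t show "comb m c u' t \<in> carrier_vec m" "comb p c y' t \<in> carrier_vec p" by simp_all
      next
        show "\<exists>x'. \<forall>t. x' t \<in> carrier_vec n \<and> x' (Suc t) = A *\<^sub>v x' t + B *\<^sub>v comb m c u' t \<and>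
                comb p c y' t = C *\<^sub>v x' t + D *\<^sub>v comb m c u' t"
          by (rule exI[of _ "comb n c x"]) (use comb_traj[where x=x and u=u' and y=y', OF A B C D xs us dyn out] in simp)
      qed
      moreover have "w = stack m L (comb m c u') @\<^sub>v stack p L (comb p c y')"
        using w data_mult[OF LT c] by simp
      ultimately show "w \<in> restricted_behavior n m p L A B C D"
        unfolding restricted_behavior_def by blast
    qed
  next
    show "restricted_behavior n m p L A B C D \<subseteq> mat_image (hankel m L T u' @\<^sub>r hankel p L T y')"
    proof
      fix w assume "w \<in> restricted_behavior n m p L A B C D"
      then obtain u2 y2 where w: "w = stack m L u2 @\<^sub>v stack p L y2"
        and bh2: "(u2, y2) \<in> behavior n m p A B C D"
        unfolding restricted_behavior_def by blast
      obtain x2 where x2: "\<forall>t. x2 t \<in> carrier_vec n \<and> x2 (Suc t) = A *\<^sub>v x2 t + B *\<^sub>v u2 t \<and> y2 t = C *\<^sub>v x2 t + D *\<^sub>v u2 t"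
        and u2c: "\<forall>t. u2 t \<in> carrier_vec m" and y2c: "\<forall>t. y2 t \<in> carrier_vec p"
      proof -
        have "(\<forall>t. u2 t \<in> carrier_vec m \<and> y2 t \<in> carrier_vec p) \<and> (\<exists>x. \<forall>t. x t \<in> carrier_vec n \<and> x (Suc t) = A *\<^sub>v x t + B *\<^sub>v u2 t \<and> y2 t = C *\<^sub>v x t + D *\<^sub>v u2 t)"
          using bh2 unfolding behavior_def by simp
        then show ?thesis using that by blast
      qed
      define K where "K = mat (n + m * L) (T - L + 1)
        (\<lambda>(i, j). if i < n then x j $ i else u' ((i - n) div m + j) $ ((i - n) mod m))"
      have Kc: "K \<in> carrier_mat (n + m * L) (T - L + 1)" unfolding K_def by simp
      have Kker: "z = 0\<^sub>v (n + m * L)"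
        if z: "z \<in> carrier_vec (n + m * L)" and zk: "\<forall>j<T - L + 1. (\<Sum>i<n + m * L. K $$ (i,j) * z $ i) = 0" for z
      proof -
        define \<xi> where "\<xi> = vec n (\<lambda>i. z $ i)"
        define \<eta> where "\<eta> l q = z $ (n + (l * m + q))" for l q
        have \<xi>c: "\<xi> \<in> carrier_vec n" unfolding \<xi>_def by simp
        have rel: "\<forall>j \<le> T - L. \<xi> \<bullet> x j + (\<Sum>l<L. \<Sum>q<m. \<eta> l q * u' (j+l) $ q) = 0"
        proof (intro allI impI)
          fix j assume j: "j \<le> T - L"
          have "0 = (\<Sum>i<n + m * L. K $$ (i,j) * z $ i)" using zk j by simp
          also have "\<dots> = (\<Sum>i<n. K $$ (i,j) * z $ i) + (\<Sum>i<m * L. K $$ (n + i, j) * z $ (n + i))"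
            by (rule sum_split_add)
          also have "(\<Sum>i<n. K $$ (i,j) * z $ i) = \<xi> \<bullet> x j"
            using j by (auto simp: sp_sum[OF xs] K_def \<xi>_def mult.commute intro!: sum.cong)
          also have "(\<Sum>i<m * L. K $$ (n + i, j) * z $ (n + i)) = (\<Sum>l<L. \<Sum>q<m. K $$ (n + (l*m+q), j) * z $ (n + (l*m+q)))"
            by (rule sum_block)
          also have "\<dots> = (\<Sum>l<L. \<Sum>q<m. \<eta> l q * u' (j+l) $ q)"
          proof (intro sum.cong refl)
            fix l q assume l: "l \<in> {..<L}" and q: "q \<in> {..<m}"
            have lt: "l * m + q < m * L"
            proof -
              have "l * m + q < Suc l * m" using q by simp
              also have "\<dots> \<le> L * m" using l by (intro mult_right_mono) auto
              finally show ?thesis by (simp add: mult.commute)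
            qed
            show "K $$ (n + (l*m+q), j) * z $ (n + (l*m+q)) = \<eta> l q * u' (j+l) $ q"
              using lt q j by (simp add: K_def \<eta>_def add.commute)
          qed
          finally show "\<xi> \<bullet> x j + (\<Sum>l<L. \<Sum>q<m. \<eta> l q * u' (j+l) $ q) = 0" by simp
        qed
        have res: "\<xi> = 0\<^sub>v n \<and> (\<forall>l<L. \<forall>q<m. \<eta> l q = 0)"
          by (rule key_left_ker[OF A B ctr PE' xs us dyn \<xi>c rel])
        show ?thesis
        proof (rule eq_vecI)
          fix i assume "i < dim_vec (0\<^sub>v (n + m * L))"
          then have i: "i < n + m * L" by simp
          show "z $ i = 0\<^sub>v (n + m * L) $ i"
          proof (cases "i < n")
            case True
            then have "z $ i = \<xi> $ i" unfolding \<xi>_def by simp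
            then show ?thesis using res True i by simp
          next
            case False
            define l where "l = (i - n) div m"
            define q where "q = (i - n) mod m"
            have m0: "m > 0" using i False by (cases m) auto
            have iq: "i = n + (l * m + q)" using False unfolding l_def q_def by simp
            have l: "l < L" using i False unfolding l_def by (simp add: less_mult_imp_div_less mult.commute)
            have q: "q < m" using m0 unfolding q_def by simp
            have "z $ i = \<eta> l q" unfolding \<eta>_def using iq by simp
            then show ?thesis using res l q i by simp
          qed
        qed (use z in simp)
      qed
      define b where "b = vec (n + m * L) (\<lambda>i. if i < n then x2 0 $ i else u2 ((i - n) div m) $ ((i - n) mod m))"
      obtain c where c: "c \<in> carrier_vec (T - L + 1)" and Kc_eq: "K *\<^sub>v c = b"
        using left_ker_imp_surj[OF Kc Kker, of b] unfolding b_def by auto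
      have x20: "x2 0 \<in> carrier_vec n" using x2 by blast
      have init: "comb n c x 0 = x2 0"
      proof (rule eq_vecI)
        fix i assume "i < dim_vec (x2 0)"
        moreover have "x2 0 \<in> carrier_vec n" using x2 by blast
        ultimately have i: "i < n" by simp
        have "x2 0 $ i = b $ i" unfolding b_def using i by simp
        also have "\<dots> = (\<Sum>j<T - L + 1. K $$ (i,j) * c $ j)"
          using Kc_eq mult_mat_vec_index_sum[OF Kc c, of i] i by simp
        also have "\<dots> = comb n c x 0 $ i"
          using i c by (auto simp: comb_index K_def mult.commute intro!: sum.cong)
        finally show "comb n c x 0 $ i = x2 0 $ i" by simp
      qed (use x20 in simp)
      have uin: "comb m c u' t = u2 t" if t: "t < L" for t
      proof (rule eq_vecI)
        fix q assume "q < dim_vec (u2 t)"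
        then have q: "q < m" using spec[OF u2c, of t] by simp
        have lt: "t * m + q < m * L"
        proof -
          have "t * m + q < Suc t * m" using q by simp
          also have "\<dots> \<le> L * m" using t by (intro mult_right_mono) auto
          finally show ?thesis by (simp add: mult.commute)
        qed
        have "u2 t $ q = b $ (n + (t*m+q))" unfolding b_def using lt q by simp
        also have "\<dots> = (\<Sum>j<T - L + 1. K $$ (n + (t*m+q),j) * c $ j)"
          using Kc_eq mult_mat_vec_index_sum[OF Kc c, of "n + (t*m+q)"] lt by simp
        also have "\<dots> = comb m c u' t $ q"
          using lt q c by (auto simp: comb_index K_def mult.commute intro!: sum.cong)
        finally show "comb m c u' t $ q = u2 t $ q" by simp
      qed (use spec[OF u2c, of t] in simp)
      have xin: "t < L \<Longrightarrow> comb n c x t = x2 t" for t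
      proof (induction t)
        case 0 then show ?case using init by simp
      next
        case (Suc t)
        then have "comb n c x (Suc t) = A *\<^sub>v x2 t + B *\<^sub>v u2 t"
          using comb_traj(1)[where x=x and u=u' and y=y' and c=c and t=t, OF A B C D xs us dyn out] uin[of t] by simp
        then show ?case using x2 by simp
      qed
      have yin: "comb p c y' t = y2 t" if t: "t < L" for t
        using comb_traj(2)[where x=x and u=u' and y=y' and c=c and t=t, OF A B C D xs us dyn out] xin[OF t] uin[OF t] x2 by simp
      have "w = (hankel m L T u' @\<^sub>r hankel p L T y') *\<^sub>v c"
        unfolding data_mult[OF LT c] w using stack_cong[of L "comb m c u'" u2 m] stack_cong[of L "comb p c y'" y2 p] uin yin
        by simp
      then show "w \<in> mat_image (hankel m L T u' @\<^sub>r hankel p L T y')"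
        unfolding mat_image_def dimHd using c by blast
    qed
  qed
qed

definition evp :: "nat \<Rightarrow> real poly \<Rightarrow> (nat \<Rightarrow> real) \<Rightarrow> nat \<Rightarrow> real" where
  "evp K P w j = (\<Sum>i<K. coeff P i * w (j + i))"

lemma evp_add: "evp K (P + Q) w j = evp K P w j + evp K Q w j"
  unfolding evp_def by (simp add: distrib_right sum.distrib)

lemma evp_const: "K \<ge> 1 \<Longrightarrow> evp K [:c:] w j = c * w j"
proof -
  assume K: "K \<ge> 1"
  have "evp K [:c:] w j = (\<Sum>i<K. if i = 0 then c * w j else 0)"
    unfolding evp_def by (intro sum.cong refl) (auto simp: coeff_pCons split: nat.splits)
  also have "\<dots> = c * w j" using K by (simp add: sum.delta)
  finally show ?thesis .
qed

lemma evp_lin: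
  assumes deg: "degree P + 1 < K"
  shows "evp K ([:-\<mu>, 1:] * P) w j = evp K P w (Suc j) - \<mu> * evp K P w j"
proof -
  obtain K' where K': "K = Suc K'" using deg by (cases K) auto
  have eq: "[:-\<mu>, 1:] * P = Polynomial.smult (-\<mu>) P + pCons 0 P" by (simp add: mult_pCons_left)
  have "evp K (pCons 0 P) w j = (\<Sum>i<K'. coeff P i * w (j + Suc i))"
    unfolding evp_def K' sum.lessThan_Suc_shift by simp
  also have "\<dots> = evp K P w (Suc j)"
  proof -
    have "coeff P K' = 0" using deg K' by (intro coeff_eq_0) simp
    then show ?thesis unfolding evp_def K' by simp
  qed
  finally have "evp K (pCons 0 P) w j = evp K P w (Suc j)" .
  moreover have "evp K (Polynomial.smult (-\<mu>) P) w j = - \<mu> * evp K P w j"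
    unfolding evp_def by (simp add: sum_distrib_left mult_ac sum_negf)
  ultimately show ?thesis unfolding eq evp_add by simp
qed

lemma evp_bound:
  assumes "degree P < L'" "L' \<le> K"
  shows "evp K P w j = (\<Sum>l<L'. coeff P l * w (j + l))"
  unfolding evp_def
  by (rule sum.mono_neutral_right) (use assms in \<open>auto intro: coeff_eq_0\<close>)

definition Qs :: "real \<Rightarrow> real poly \<Rightarrow> nat \<Rightarrow> real poly" where
  "Qs \<mu> G k = ((\<lambda>p. synthetic_div p \<mu>) ^^ k) G"

lemma Qs_0[simp]: "Qs \<mu> G 0 = G" unfolding Qs_def by simp
lemma Qs_Suc: "Qs \<mu> G (Suc k) = synthetic_div (Qs \<mu> G k) \<mu>" unfolding Qs_def by simp
lemma Qs_rec: "[:-\<mu>, 1:] * Qs \<mu> G (Suc k) + [:poly (Qs \<mu> G k) \<mu>:] = Qs \<mu> G k"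
  unfolding Qs_Suc by (rule synthetic_div_correct')
lemma Qs_degree: "degree (Qs \<mu> G k) = degree G - k"
  by (induction k) (auto simp: Qs_Suc degree_synthetic_div)

lemma evp_Qs:
  assumes deg: "degree G < K" and k: "Suc k < K"
  shows "evp K (Qs \<mu> G k) w j = evp K (Qs \<mu> G (Suc k)) w (Suc j) - \<mu> * evp K (Qs \<mu> G (Suc k)) w j
      + poly (Qs \<mu> G k) \<mu> * w j"
proof -
  have "evp K (Qs \<mu> G k) w j = evp K ([:-\<mu>, 1:] * Qs \<mu> G (Suc k) + [:poly (Qs \<mu> G k) \<mu>:]) w j"
    using Qs_rec[of \<mu> G k] by simp
  also have "\<dots> = evp K ([:-\<mu>, 1:] * Qs \<mu> G (Suc k)) w j + poly (Qs \<mu> G k) \<mu> * w j"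
    using k by (simp add: evp_add evp_const)
  also have "evp K ([:-\<mu>, 1:] * Qs \<mu> G (Suc k)) w j = evp K (Qs \<mu> G (Suc k)) w (Suc j) - \<mu> * evp K (Qs \<mu> G (Suc k)) w j"
    by (rule evp_lin) (use deg k in \<open>simp add: Qs_degree\<close>)
  finally show ?thesis .
qed

definition jordA :: "nat \<Rightarrow> real \<Rightarrow> real mat" where
  "jordA n \<mu> = mat n n (\<lambda>(i,k). if k = i then \<mu> else if k = Suc i then 1 else 0)"

lemma jordA_carrier[simp]: "jordA n \<mu> \<in> carrier_mat n n" unfolding jordA_def by simp

lemma jordA_mult:
  assumes v: "v \<in> carrier_vec n" and r: "r < n"
  shows "(jordA n \<mu> *\<^sub>v v) $ r = \<mu> * v $ r + (if Suc r < n then v $ Suc r else 0)"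
proof -
  have "(jordA n \<mu> *\<^sub>v v) $ r = (\<Sum>k<n. jordA n \<mu> $$ (r,k) * v $ k)"
    by (rule mult_mat_vec_index_sum[OF jordA_carrier v r])
  also have "\<dots> = (\<Sum>k<n. (if k = r then \<mu> * v $ k else 0) + (if k = Suc r then v $ k else 0))"
    using r by (intro sum.cong refl) (auto simp: jordA_def)
  also have "\<dots> = \<mu> * v $ r + (if Suc r < n then v $ Suc r else 0)"
    using r by (simp add: sum.distrib sum.delta)
  finally show ?thesis .
qed

lemma jordA_trans_mult:
  assumes v: "v \<in> carrier_vec n" and i: "i < n"
  shows "((jordA n \<mu>)\<^sup>T *\<^sub>v v) $ i = \<mu> * v $ i + (if 1 \<le> i then v $ (i - 1) else 0)"
proof -
  have At: "(jordA n \<mu>)\<^sup>T \<in> carrier_mat n n" by simp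
  have "((jordA n \<mu>)\<^sup>T *\<^sub>v v) $ i = (\<Sum>k<n. (jordA n \<mu>)\<^sup>T $$ (i,k) * v $ k)"
    by (rule mult_mat_vec_index_sum[OF At v i])
  also have "\<dots> = (\<Sum>k<n. (if k = i then \<mu> * v $ k else 0) + (if Suc k = i then v $ k else 0))"
    using i by (intro sum.cong refl) (auto simp: jordA_def)
  also have "\<dots> = \<mu> * v $ i + (if 1 \<le> i then v $ (i - 1) else 0)"
  proof -
    have "(\<Sum>k<n. (if Suc k = i then v $ k else 0)) = (if 1 \<le> i then v $ (i - 1) else 0)"
    proof (cases i)
      case 0 then show ?thesis by simp
    next
      case (Suc i')
      then have "(\<Sum>k<n. (if Suc k = i then v $ k else 0)) = (\<Sum>k<n. (if k = i' then v $ k else 0))"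
        by (intro sum.cong) auto
      also have "\<dots> = v $ i'" using i Suc by (simp add: sum.delta)
      finally show ?thesis using Suc by simp
    qed
    then show ?thesis using i by (simp add: sum.distrib sum.delta)
  qed
  finally show ?thesis .
qed

lemma jord_ctrb:
  assumes B: "B \<in> carrier_mat n m" and n: "n \<ge> 1" and q0: "q0 < m"
    and bn: "B $$ (n - 1, q0) \<noteq> 0"
  shows "controllable n m (jordA n \<mu>) B"
  unfolding controllable_iff[OF jordA_carrier B]
proof (intro ballI impI)
  let ?A = "jordA n \<mu>"
  fix \<xi> assume \<xi>: "\<xi> \<in> carrier_vec n"
    and H: "\<forall>k<n. \<forall>q<m. (B\<^sup>T *\<^sub>v trp ?A k \<xi>) $ q = 0"
  define f where "f l i = trp ?A l \<xi> $ i" for l i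
  define b where "b r = B $$ (r, q0)" for r
  have tc: "\<And>l. trp ?A l \<xi> \<in> carrier_vec n" using trp_carrier[OF jordA_carrier \<xi>] .
  have H': "(\<Sum>r<n. b r * f l r) = 0" if l: "l < n" for l
  proof -
    have "(B\<^sup>T *\<^sub>v trp ?A l \<xi>) $ q0 = (\<Sum>r<n. b r * f l r)"
      using B q0 by (auto simp: sp_sum[OF tc] b_def f_def intro!: sum.cong)
    then show ?thesis using H l q0 by simp
  qed
  have rec: "f (Suc l) i = \<mu> * f l i + (if 1 \<le> i then f l (i - 1) else 0)" if i: "i < n" for l i
    unfolding f_def trp_Suc using jordA_trans_mult[OF tc i] .
  define \<Phi> where "\<Phi> k l = (\<Sum>r<n. b r * (if k \<le> r then f l (r - k) else 0))" for k l
  have \<Phi>rec: "\<Phi> k (Suc l) = \<mu> * \<Phi> k l + \<Phi> (Suc k) l" for k l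
  proof -
    have "\<Phi> k (Suc l) = (\<Sum>r<n. \<mu> * (b r * (if k \<le> r then f l (r - k) else 0))
                                 + b r * (if Suc k \<le> r then f l (r - Suc k) else 0))"
    proof (unfold \<Phi>_def, intro sum.cong refl)
      fix r assume r: "r \<in> {..<n}"
      show "b r * (if k \<le> r then f (Suc l) (r - k) else 0) =
            \<mu> * (b r * (if k \<le> r then f l (r - k) else 0)) + b r * (if Suc k \<le> r then f l (r - Suc k) else 0)"
      proof (cases "k \<le> r")
        case True
        have "f (Suc l) (r - k) = \<mu> * f l (r - k) + (if 1 \<le> r - k then f l (r - k - 1) else 0)"
          using rec[of "r - k" l] r by simp
        then show ?thesis using True by (auto simp: algebra_simps)
      qed auto
    qed
    also have "\<dots> = \<mu> * \<Phi> k l + \<Phi> (Suc k) l"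
      unfolding \<Phi>_def by (simp add: sum.distrib sum_distrib_left)
    finally show ?thesis .
  qed
  have \<Phi>0: "\<Phi> k l = 0" if "k + l < n" for k l
    using that
  proof (induction k arbitrary: l)
    case 0
    then show ?case using H'[of l] unfolding \<Phi>_def by simp
  next
    case (Suc k)
    have "\<Phi> (Suc k) l = \<Phi> k (Suc l) - \<mu> * \<Phi> k l" using \<Phi>rec[of k l] by simp
    then show ?case using Suc.IH[of "Suc l"] Suc.IH[of l] Suc.prems by simp
  qed
  have f0: "\<And>r. f 0 r = \<xi> $ r" unfolding f_def by simp
  have bn': "b (n - 1) \<noteq> 0" using bn unfolding b_def .
  have z: "\<xi> $ t = 0" if t: "t < n" for t
    using t
  proof (induction t rule: less_induct)
    case (less t)
    define k where "k = n - 1 - t"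
    have "0 = \<Phi> k 0" using \<Phi>0[of k 0] less.prems unfolding k_def by simp
    also have "\<Phi> k 0 = (\<Sum>r<n - 1. b r * (if k \<le> r then \<xi> $ (r - k) else 0)) + b (n - 1) * \<xi> $ t"
    proof -
      have "\<Phi> k 0 = (\<Sum>r<Suc (n - 1). b r * (if k \<le> r then \<xi> $ (r - k) else 0))"
        unfolding \<Phi>_def using n by (simp, intro sum.cong refl, simp add: f0)
      also have "\<dots> = (\<Sum>r<n - 1. b r * (if k \<le> r then \<xi> $ (r - k) else 0)) + b (n - 1) * \<xi> $ t"
        unfolding sum.lessThan_Suc using less.prems unfolding k_def by simp
      finally show ?thesis .
    qed
    also have "(\<Sum>r<n - 1. b r * (if k \<le> r then \<xi> $ (r - k) else 0)) = 0"
    proof (rule sum.neutral, intro ballI)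
      fix r assume r: "r \<in> {..<n - 1}"
      have "\<xi> $ (r - k) = 0" if "k \<le> r"
        using less.IH[of "r - k"] r that less.prems unfolding k_def by auto
      then show "b r * (if k \<le> r then \<xi> $ (r - k) else 0) = 0" by simp
    qed
    finally show ?case using bn' by simp
  qed
  show "\<xi> = 0\<^sub>v n" by (rule eq_vecI) (use z \<xi> in auto)
qed

lemma nonPE_witness:
  fixes u :: "nat \<Rightarrow> real vec"
  assumes nPE: "\<not> persistently_exciting m T N u" and N: "N \<ge> 1" and m: "m \<ge> 1"
  obtains g :: "nat \<Rightarrow> nat \<Rightarrow> real" where "\<exists>r<N. \<exists>q<m. g r q \<noteq> 0"
    "\<forall>j. j + N \<le> T \<longrightarrow> (\<Sum>r<N. \<Sum>q<m. g r q * u (j+r) $ q) = 0"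
proof (cases "N \<le> T")
  case True
  let ?H = "hankel m N T u"
  have "vec_space.rank (m*N) ?H \<noteq> m*N"
    using nPE True unfolding persistently_exciting_def full_row_rank_def by simp
  then obtain z where z: "z \<in> carrier_vec (m*N)" and zk: "\<forall>j<T-N+1. (\<Sum>i<m*N. ?H $$ (i,j) * z $ i) = 0"
    and z0: "z \<noteq> 0\<^sub>v (m*N)"
    using full_rank_iff_left_ker[OF hankel_carrier] by blast
  define g :: "nat \<Rightarrow> nat \<Rightarrow> real" where "g r q = z $ (r * m + q)" for r q
  obtain i where i: "i < m * N" "z $ i \<noteq> 0" using z z0 by (metis eq_vecI carrier_vecD index_zero_vec)
  have m0: "m > 0" using m by simp
  have "i div m < N" using i by (simp add: less_mult_imp_div_less mult.commute)
  moreover have "i mod m < m" using m0 by simp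
  moreover have "g (i div m) (i mod m) \<noteq> 0" unfolding g_def using i by simp
  ultimately have nz: "\<exists>r<N. \<exists>q<m. g r q \<noteq> 0" by blast
  have rel: "\<forall>j. j + N \<le> T \<longrightarrow> (\<Sum>r<N. \<Sum>q<m. g r q * u (j+r) $ q) = 0"
  proof (intro allI impI)
    fix j assume j: "j + N \<le> T"
    then have jl: "j < T - N + 1" by simp
    have "0 = (\<Sum>i<m*N. ?H $$ (i,j) * z $ i)" using zk jl by simp
    also have "\<dots> = (\<Sum>r<N. \<Sum>q<m. ?H $$ (r*m+q, j) * z $ (r*m+q))" by (rule sum_block)
    also have "\<dots> = (\<Sum>r<N. \<Sum>q<m. g r q * u (j+r) $ q)"
    proof (intro sum.cong refl)
      fix r q assume r: "r \<in> {..<N}" and q: "q \<in> {..<m}"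
      have lt: "r * m + q < m * N"
      proof -
        have "r * m + q < Suc r * m" using q by simp
        also have "\<dots> \<le> N * m" using r by (intro mult_right_mono) auto
        finally show ?thesis by (simp add: mult.commute)
      qed
      show "?H $$ (r*m+q, j) * z $ (r*m+q) = g r q * u (j+r) $ q"
        using lt jl q by (simp add: hankel_index g_def add.commute)
    qed
    finally show "(\<Sum>r<N. \<Sum>q<m. g r q * u (j+r) $ q) = 0" by simp
  qed
  show ?thesis using that nz rel by blast
next
  case False
  define g :: "nat \<Rightarrow> nat \<Rightarrow> real" where "g r q = (if r = 0 \<and> q = 0 then (1::real) else 0)" for r q
  have "\<exists>r<N. \<exists>q<m. g r q \<noteq> 0" using N m unfolding g_def by (intro exI[of _ 0]) auto
  moreover have "\<forall>j. j + N \<le> T \<longrightarrow> (\<Sum>r<N. \<Sum>q<m. g r q * u (j+r) $ q) = 0" using False by auto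
  ultimately show ?thesis using that by blast
qed

definition Gp :: "(nat \<Rightarrow> nat \<Rightarrow> real) \<Rightarrow> nat \<Rightarrow> nat \<Rightarrow> real poly" where
  "Gp g N q = (\<Sum>r<N. monom (g r q) r)"

lemma coeff_Gp: "coeff (Gp g N q) i = (if i < N then g i q else 0)"
  unfolding Gp_def coeff_sum by (simp add: coeff_monom sum.delta[of "{..<N}" i "\<lambda>_. g i q"] if_distrib cong: if_cong)

lemma degree_Gp: "N \<ge> 1 \<Longrightarrow> degree (Gp g N q) < N"
proof -
  assume N: "N \<ge> 1"
  have "degree (Gp g N q) \<le> N - 1" by (rule degree_le) (use N in \<open>auto simp: coeff_Gp\<close>)
  then show ?thesis using N by simp
qed

lemma choose_mu:
  assumes "\<exists>r<N. \<exists>q<m. g r q \<noteq> 0"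
  obtains \<mu> q0 where "q0 < m" "poly (Gp g N q0) \<mu> \<noteq> 0"
proof -
  obtain r q0 where r: "r < N" and q0: "q0 < m" and g: "g r q0 \<noteq> 0" using assms by blast
  have "Gp g N q0 \<noteq> 0"
  proof
    assume "Gp g N q0 = 0"
    then have "coeff (Gp g N q0) r = 0" by simp
    then show False using r g by (simp add: coeff_Gp)
  qed
  then have "finite {x. poly (Gp g N q0) x = 0}" by (rule poly_roots_finite)
  then obtain \<mu> where "\<mu> \<notin> {x. poly (Gp g N q0) x = 0}"
    using ex_new_if_finite[OF infinite_UNIV_char_0] by blast
  then show ?thesis using that q0 by auto
qed

lemma only_if_direction:
  fixes u :: "nat \<Rightarrow> real vec"
  assumes n: "n \<ge> 1" and m: "m \<ge> 1" and p: "p \<ge> 1"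
    and L1: "1 \<le> L" and LT: "L \<le> T"
    and uc: "\<forall>t<T. u t \<in> carrier_vec m"
    and univ: "universal n m p T L u"
  shows "persistently_exciting m T (n + L) u"
proof (rule ccontr)
  assume nPE: "\<not> persistently_exciting m T (n + L) u"
  define N where "N = n + L"
  define u' where "u' t = (if t < T then u t else 0\<^sub>v m)" for t
  have u'c: "\<And>t. u' t \<in> carrier_vec m" using uc unfolding u'_def by auto
  have uu: "\<And>t. t < T \<Longrightarrow> u' t = u t" unfolding u'_def by simp
  have nPE': "\<not> persistently_exciting m T N u'"
    using nPE PE_cong[of T u' u m N] uu unfolding N_def by auto
  have N1: "N \<ge> 1" unfolding N_def using n by simp
  obtain g where gnz: "\<exists>r<N. \<exists>q<m. g r q \<noteq> 0"
    and grel: "\<forall>j. j + N \<le> T \<longrightarrow> (\<Sum>r<N. \<Sum>q<m. g r q * u' (j+r) $ q) = 0"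
    using nonPE_witness[OF nPE' N1 m] by blast
  obtain \<mu> q0 where q0: "q0 < m" and mu: "poly (Gp g N q0) \<mu> \<noteq> 0"
    using choose_mu[OF gnz] by blast
  define Q where "Q k q = Qs \<mu> (Gp g N q) k" for k q
  define cc where "cc k q = poly (Q k q) \<mu>" for k q
  define w where "w q t = u' t $ q" for q t
  define e where "e r j = (\<Sum>q<m. evp N (Q (n - r) q) (w q) j)" for r j
  define \<eta> where "\<eta> l q = - coeff (Q n q) l" for l q
  define A where "A = jordA n \<mu>"
  define B where "B = mat n m (\<lambda>(r,q). - cc (n - Suc r) q)"
  define C :: "real mat" where "C = mat p n (\<lambda>(i,k). if i = 0 \<and> k = 0 then 1 else 0)"
  define D :: "real mat" where "D = 0\<^sub>m p m"
  have A: "A \<in> carrier_mat n n" unfolding A_def by simp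
  have B: "B \<in> carrier_mat n m" unfolding B_def by simp
  have C: "C \<in> carrier_mat p n" unfolding C_def by simp
  have D: "D \<in> carrier_mat p m" unfolding D_def by simp
  have degG: "degree (Gp g N q) < N" for q using degree_Gp[OF N1] .
  have erec: "e r (Suc j) = \<mu> * e r j + e (Suc r) j - (\<Sum>q<m. cc (n - Suc r) q * w q j)"
    if r: "r < n" for r j
  proof -
    define k where "k = n - Suc r"
    have k: "Suc k < N" using r L1 unfolding N_def k_def by simp
    have sk: "Suc k = n - r" using r unfolding k_def by simp
    have eq: "evp N (Q k q) (w q) j = evp N (Q (n - r) q) (w q) (Suc j) - \<mu> * evp N (Q (n - r) q) (w q) j
        + cc k q * w q j" for q
      using evp_Qs[OF degG k, where \<mu>=\<mu> and w="w q" and j=j] unfolding Q_def cc_def sk .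
    have "e (Suc r) j = (\<Sum>q<m. evp N (Q (n - r) q) (w q) (Suc j) - \<mu> * evp N (Q (n - r) q) (w q) j
        + cc k q * w q j)"
      unfolding e_def k_def[symmetric] using eq by (intro sum.cong refl) 
    also have "\<dots> = e r (Suc j) - \<mu> * e r j + (\<Sum>q<m. cc k q * w q j)"
      unfolding e_def sum.distrib sum_subtractf sum_distrib_left ..
    finally show ?thesis unfolding k_def by simp
  qed
  have en: "e n j = 0" if j: "j + N \<le> T" for j
  proof -
    have "e n j = (\<Sum>q<m. \<Sum>i<N. g i q * u' (j + i) $ q)"
      unfolding e_def Q_def evp_def w_def by (simp add: coeff_Gp)
    also have "\<dots> = (\<Sum>i<N. \<Sum>q<m. g i q * u' (j + i) $ q)" by (rule sum.swap)
    also have "\<dots> = 0" using grel j by simp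
    finally show ?thesis .
  qed
  have e0: "e 0 j + (\<Sum>l<L. \<Sum>q<m. \<eta> l q * u' (j + l) $ q) = 0" for j
  proof -
    have "e 0 j = (\<Sum>q<m. \<Sum>l<L. coeff (Q n q) l * u' (j + l) $ q)"
    proof -
      have "evp N (Q n q) (w q) j = (\<Sum>l<L. coeff (Q n q) l * w q (j + l))" for q
      proof (rule evp_bound)
        show "degree (Q n q) < L" using degG[of q] L1 unfolding Q_def Qs_degree N_def by arith
      qed (simp add: N_def)
      then show ?thesis unfolding e_def w_def by simp
    qed
    also have "\<dots> = - (\<Sum>l<L. \<Sum>q<m. \<eta> l q * u' (j + l) $ q)"
      unfolding \<eta>_def by (simp add: sum.swap[of _ "{..<m}" "{..<L}"] sum_negf)
    finally show ?thesis by simp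
  qed
  have bn: "B $$ (n - 1, q0) \<noteq> 0"
    using n q0 mu unfolding B_def cc_def Q_def by simp
  have ctr: "controllable n m A B" unfolding A_def by (rule jord_ctrb[OF B n q0 bn])
  have Mc: "(A, B, C, D) \<in> M_cont n m p" unfolding M_cont_def using A B C D ctr by simp
  have Bmult: "(B *\<^sub>v v) $ r = - (\<Sum>q<m. cc (n - Suc r) q * v $ q)" if v: "v \<in> carrier_vec m" and r: "r < n" for v r
    using mult_mat_vec_index_sum[OF B v r] r unfolding B_def by (simp add: sum_negf)
  define xs where "xs = rec_nat (vec n (\<lambda>r. e r 0)) (\<lambda>t v. A *\<^sub>v v + B *\<^sub>v u' t)"
  have xs0: "xs 0 = vec n (\<lambda>r. e r 0)" unfolding xs_def by simp
  have xsS: "\<And>t. xs (Suc t) = A *\<^sub>v xs t + B *\<^sub>v u' t" unfolding xs_def by simp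
  have xsc: "\<And>t. xs t \<in> carrier_vec n"
  proof -
    fix t show "xs t \<in> carrier_vec n"
      by (induction t) (use A B u'c in \<open>auto simp: xs0 xsS\<close>)
  qed
  have agree: "\<forall>r<n. r + t \<le> T - L \<longrightarrow> xs t $ r = e r t" for t
  proof (induction t)
    case 0
    then show ?case by (simp add: xs0)
  next
    case (Suc t)
    show ?case
    proof (intro allI impI)
      fix r assume r: "r < n" and rt: "r + Suc t \<le> T - L"
      have "xs (Suc t) $ r = (A *\<^sub>v xs t) $ r + (B *\<^sub>v u' t) $ r"
        using xsS[of t] A B xsc u'c r by simp
      also have "(A *\<^sub>v xs t) $ r = \<mu> * xs t $ r + (if Suc r < n then xs t $ Suc r else 0)"
        unfolding A_def using jordA_mult[OF xsc r] .
      also have "(B *\<^sub>v u' t) $ r = - (\<Sum>q<m. cc (n - Suc r) q * w q t)"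
        using Bmult[OF u'c r] unfolding w_def .
      also have "xs t $ r = e r t" using Suc.IH r rt by simp
      also have "(if Suc r < n then xs t $ Suc r else 0) = e (Suc r) t"
      proof (cases "Suc r < n")
        case True
        then show ?thesis using Suc.IH rt by simp
      next
        case False
        then have "Suc r = n" using r by simp
        moreover have "t + N \<le> T" using rt \<open>Suc r = n\<close> LT unfolding N_def by simp
        ultimately show ?thesis using en False by simp
      qed
      finally show "xs (Suc t) $ r = e r (Suc t)" using erec[OF r, of t] by simp
    qed
  qed
  define ys where "ys t = C *\<^sub>v xs t" for t
  have ysc: "\<And>t. ys t \<in> carrier_vec p" unfolding ys_def using C xsc by simp
  have ys0: "ys t $ 0 = xs t $ 0" for t
  proof -
    have "ys t $ 0 = (\<Sum>k<n. C $$ (0,k) * xs t $ k)"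
      unfolding ys_def using mult_mat_vec_index_sum[OF C xsc, of 0 t] p by simp
    also have "\<dots> = (\<Sum>k<n. if k = 0 then xs t $ k else 0)"
      using p by (intro sum.cong refl) (auto simp: C_def)
    also have "\<dots> = xs t $ 0" using n by (simp add: sum.delta)
    finally show ?thesis .
  qed
  have Dz: "\<And>v. v \<in> carrier_vec m \<Longrightarrow> D *\<^sub>v v = 0\<^sub>v p" unfolding D_def by auto
  have bh: "(u', ys) \<in> behavior n m p A B C D"
    unfolding behavior_def
  proof (intro CollectI case_prodI conjI allI)
    fix t show "u' t \<in> carrier_vec m" "ys t \<in> carrier_vec p" using u'c ysc by auto
  next
    show "\<exists>x. \<forall>t. x t \<in> carrier_vec n \<and> x (Suc t) = A *\<^sub>v x t + B *\<^sub>v u' t \<and> ys t = C *\<^sub>v x t + D *\<^sub>v u' t"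
      by (rule exI[of _ xs]) (use xsc xsS Dz u'c C in \<open>auto simp: ys_def\<close>)
  qed
  have dat: "stack m T u @\<^sub>v stack p T ys \<in> restricted_behavior n m p T A B C D"
  proof -
    have "stack m T u = stack m T u'" by (rule stack_cong) (use uu in simp)
    then have "stack m T u @\<^sub>v stack p T ys = stack m T u' @\<^sub>v stack p T ys" by simp
    then show ?thesis unfolding restricted_behavior_def using bh by blast
  qed
  have RB: "restricted_behavior n m p L A B C D = mat_image (hankel m L T u @\<^sub>r hankel p L T ys)"
    using univ Mc ysc dat unfolding universal_def by blast
  define xw where "xw = rec_nat (unit_vec n 0) (\<lambda>t v. A *\<^sub>v v + B *\<^sub>v 0\<^sub>v m)"
  have xw0: "xw 0 = unit_vec n 0" unfolding xw_def by simp
  have xwS: "\<And>t. xw (Suc t) = A *\<^sub>v xw t + B *\<^sub>v 0\<^sub>v m" unfolding xw_def by simp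
  have xwc: "\<And>t. xw t \<in> carrier_vec n"
  proof -
    fix t show "xw t \<in> carrier_vec n"
      by (induction t) (use A B in \<open>auto simp: xw0 xwS\<close>)
  qed
  define yw where "yw t = C *\<^sub>v xw t" for t
  have bhw: "((\<lambda>_. 0\<^sub>v m), yw) \<in> behavior n m p A B C D"
    unfolding behavior_def
  proof (intro CollectI case_prodI conjI allI)
    fix t show "0\<^sub>v m \<in> carrier_vec m" "yw t \<in> carrier_vec p" using C xwc by (auto simp: yw_def)
  next
    show "\<exists>x. \<forall>t. x t \<in> carrier_vec n \<and> x (Suc t) = A *\<^sub>v x t + B *\<^sub>v 0\<^sub>v m \<and> yw t = C *\<^sub>v x t + D *\<^sub>v 0\<^sub>v m"
      by (rule exI[of _ xw]) (use xwc xwS Dz C in \<open>auto simp: yw_def\<close>)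
  qed
  define w0 where "w0 = stack m L (\<lambda>_. 0\<^sub>v m) @\<^sub>v stack p L yw"
  have "w0 \<in> restricted_behavior n m p L A B C D"
    unfolding restricted_behavior_def w0_def using bhw by blast
  then have "w0 \<in> mat_image (hankel m L T u @\<^sub>r hankel p L T ys)" using RB by simp
  then obtain c where c: "c \<in> carrier_vec (T - L + 1)"
    and wc: "w0 = (hankel m L T u @\<^sub>r hankel p L T ys) *\<^sub>v c"
    unfolding mat_image_def by (auto simp: append_rows_def)
  have "hankel m L T u = hankel m L T u'" by (rule hankel_cong[OF LT]) (use uu in simp)
  then have weq: "w0 = stack m L (comb m c u') @\<^sub>v stack p L (comb p c ys)"
    using wc data_mult[OF LT c] by simp
  have ml: "m * L + 0 < m * L + p * L" using p L1 by simp
  have lhs1: "w0 $ (m * L) = 1"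
  proof -
    have "w0 $ (m * L) = yw 0 $ 0" unfolding w0_def using p L1 by (simp add: stack_index)
    also have "\<dots> = xw 0 $ 0"
    proof -
      have "yw 0 $ 0 = (\<Sum>k<n. C $$ (0,k) * xw 0 $ k)"
        unfolding yw_def using mult_mat_vec_index_sum[OF C xwc, of 0 0] p by simp
      also have "\<dots> = (\<Sum>k<n. if k = 0 then xw 0 $ k else 0)"
        using p by (intro sum.cong refl) (auto simp: C_def)
      also have "\<dots> = xw 0 $ 0" using n by (simp add: sum.delta)
      finally show ?thesis .
    qed
    also have "\<dots> = 1" using n by (simp add: xw0)
    finally show ?thesis .
  qed
  have rhs1: "w0 $ (m * L) = (\<Sum>j<T - L + 1. c $ j * ys j $ 0)"
    using weq p L1 c by (simp add: stack_index comb_index)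
  have lhs2: "w0 $ (l * m + q) = 0" if l: "l < L" and q: "q < m" for l q
  proof -
    have "l * m + q < m * L"
    proof -
      have "l * m + q < Suc l * m" using q by simp
      also have "\<dots> \<le> L * m" using l by (intro mult_right_mono) auto
      finally show ?thesis by (simp add: mult.commute)
    qed
    then show ?thesis unfolding w0_def using q l by (simp add: stack_index' stack_index)
  qed
  have rhs2: "w0 $ (l * m + q) = (\<Sum>j<T - L + 1. c $ j * u' (l + j) $ q)" if l: "l < L" and q: "q < m" for l q
  proof -
    have lt: "l * m + q < m * L"
    proof -
      have "l * m + q < Suc l * m" using q by simp
      also have "\<dots> \<le> L * m" using l by (intro mult_right_mono) auto
      finally show ?thesis by (simp add: mult.commute)
    qed
    have "w0 $ (l * m + q) = comb m c u' l $ q" using weq lt q l by (simp add: stack_index' stack_index)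
    then show ?thesis using q c by (simp add: comb_index)
  qed
  have "1 = (\<Sum>j<T - L + 1. c $ j * ys j $ 0) + (\<Sum>l<L. \<Sum>q<m. \<eta> l q * (\<Sum>j<T - L + 1. c $ j * u' (l + j) $ q))"
  proof -
    have "(\<Sum>l<L. \<Sum>q<m. \<eta> l q * (\<Sum>j<T - L + 1. c $ j * u' (l + j) $ q)) = (\<Sum>l<L. \<Sum>q<m. \<eta> l q * 0)"
      using lhs2 rhs2 by (intro sum.cong refl) simp
    then show ?thesis using lhs1 rhs1 by simp
  qed
  also have "\<dots> = (\<Sum>j<T - L + 1. c $ j * (ys j $ 0 + (\<Sum>l<L. \<Sum>q<m. \<eta> l q * u' (j + l) $ q)))"
  proof -
    have "(\<Sum>l<L. \<Sum>q<m. \<eta> l q * (\<Sum>j<T - L + 1. c $ j * u' (l + j) $ q))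
        = (\<Sum>l<L. \<Sum>q<m. \<Sum>j<T - L + 1. \<eta> l q * (c $ j * u' (l + j) $ q))"
      unfolding sum_distrib_left ..
    also have "\<dots> = (\<Sum>l<L. \<Sum>q<m. \<Sum>j<T - L + 1. c $ j * (\<eta> l q * u' (j + l) $ q))"
      by (intro sum.cong refl) (simp add: mult_ac add.commute)
    also have "\<dots> = (\<Sum>j<T - L + 1. \<Sum>l<L. \<Sum>q<m. c $ j * (\<eta> l q * u' (j + l) $ q))"
      by (simp only: sum.swap[of _ "{..<m}" "{..<T - L + 1}"] sum.swap[of _ "{..<L}" "{..<T - L + 1}"])
    also have "\<dots> = (\<Sum>j<T - L + 1. c $ j * (\<Sum>l<L. \<Sum>q<m. \<eta> l q * u' (j + l) $ q))"
      unfolding sum_distrib_left ..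
    finally have S: "(\<Sum>l<L. \<Sum>q<m. \<eta> l q * (\<Sum>j<T - L + 1. c $ j * u' (l + j) $ q))
        = (\<Sum>j<T - L + 1. c $ j * (\<Sum>l<L. \<Sum>q<m. \<eta> l q * u' (j + l) $ q))" .
    show ?thesis unfolding S distrib_left sum.distrib ..
  qed
  also have "\<dots> = 0"
  proof (rule sum.neutral, intro ballI)
    fix j assume j: "j \<in> {..<T - L + 1}"
    have "ys j $ 0 = e 0 j" using ys0 agree[of j] n j by simp
    then show "c $ j * (ys j $ 0 + (\<Sum>l<L. \<Sum>q<m. \<eta> l q * u' (j + l) $ q)) = 0" using e0[of j] by simp
  qed
  finally show False by simp
qed

theorem theorem1:
  fixes n m p T L :: nat and u :: "nat \<Rightarrow> real vec"
  assumes "n \<ge> 1" and "m \<ge> 1" and "p \<ge> 1"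
    and "1 \<le> L" and "L \<le> T"
    and "\<forall>t<T. u t \<in> carrier_vec m"
  shows "universal n m p T L u \<longleftrightarrow> persistently_exciting m T (n + L) u"
proof
  assume "universal n m p T L u"
  then show "persistently_exciting m T (n + L) u"
    using only_if_direction assms by blast
next
  assume "persistently_exciting m T (n + L) u"
  then show "universal n m p T L u"
    using if_direction assms by blast
qed

end
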